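(* Let $A$ be a closed symmetric relation in $\mathfrak H$, let $\{\mathcal H,\Gamma\}$ be an AB-generalized boundary pair for $A^*$ with components $\Gamma_0,\Gamma_1$, $\gamma$-field $\gamma(\cdot)$ and Weyl family $M(\cdot)$, and $A_*=\operatorname{dom}\Gamma$. Then: (i) $\ker\Gamma=A$; (ii) $A_*=A_0\hat+\widehat{\mathfrak N}_\lambda(A_* )$ and $\widehat{\mathfrak N}_\lambda(A_* )$ is dense in $\widehat{\mathfrak N}_\lambda(A^* )$ for all $\lambda\in\mathbb C\setminus\mathbb R$; (iii) $\gamma(\lambda)$ is a densely defined bounded operator from $\operatorname{ran}\Gamma_0$ onto $\mathfrak N_\lambda(A_* )$, with $\operatorname{dom}\gamma(\lambda)=\operatorname{ran}\Gamma_0$ (independent of $\lambda$) and $\ker\gamma(\lambda)=\operatorname{mul}\Gamma_0$; (iv) $\gamma(\lambda)^*$ is a bounded everywhere defined operator, and for $\lambda\in\mathbb C\setminus\mathbb R$ $\Gamma H(\lambda)=\{\{k,\{0,\gamma(\bar\lambda)^*k\}\}:k\in\mathfrak H\}\hat+(\{0\}\times\operatorname{mul}\Gamma)$, $\Gamma_1H(\lambda)=\gamma(\bar\lambda)^*\hat+(\{0\}\times\operatorname{mul}\Gamma_1)$; (v) the closure $\overline{\gamma(\lambda)}$ is a bounded everywhere defined operator from $\mathcal H$ into $\mathfrak N_\lambda(A^* )$ and $\overline{\gamma(\lambda)}=[I+(\lambda-\mu)(A_0-\lambda)^{-1}]\overline{\gamma(\mu)}$ for $\lambda,\mu\in\mathbb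 C\setminus\mathbb R$; (vi) $M(\lambda)$ is a densely defined operator for each $\lambda\in\mathbb C\setminus\mathbb R$, $\operatorname{dom}M(\lambda)=\operatorname{ran}\Gamma_0$, $M(\lambda)\subset M(\bar\lambda)^*$, the operator $\operatorname{Im}M(\lambda)=(M(\lambda)-M(\lambda)^* )/2i$ (on $\operatorname{ran}\Gamma_0$) is bounded with $\ker\operatorname{Im}M(\lambda)=\operatorname{mul}\Gamma_0$, and for any fixed $\mu\in\mathbb C\setminus\mathbb R$, $M(\lambda)=E+M_0(\lambda)$, where $E=\operatorname{Re}M(\mu)=\frac12(M(\mu)+M(\mu)^* )\upharpoonright\operatorname{ran}\Gamma_0$ is a densely defined symmetric operator in $\mathcal H$ and $M_0(\lambda)$ is a bounded operator on $\operatorname{dom}E$ whose closure $\overline{M_0(\cdot)}$ belongs to $\mathcal R[\mathcal H]$.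
   Context: Linear relations are subspaces of product spaces, operators are identified with graphs; $\operatorname{mul}T=\{g:\{0,g\}\in T\}$, $T_1\hat+T_2=\{\{f+h,g+k\}:\{f,g\}\in T_1,\{h,k\}\in T_2\}$. $\mathfrak N_\lambda(T)=\ker(T-\lambda)$, $\widehat{\mathfrak N}_\lambda(T)=\{\{f,\lambda f\}:f\in\mathfrak N_\lambda(T)\}$. An AB-generalized boundary pair for $A^*$ is a linear relation $\Gamma:\mathfrak H^2\to\mathcal H^2$ with $\operatorname{dom}\Gamma\subset A^*$ dense in $A^*$ such that (1) Green's identity $(f',g)-(f,g')=(h',k)-(h,k')$ holds for all $\{\{f,f'\},\{h,h'\}\},\{\{g,g'\},\{k,k'\}\}\in\Gamma$; (2) $\operatorname{ran}\Gamma_0$ is dense in $\mathcal H$; (3) $A_0:=\ker\Gamma_0$ is selfadjoint; here $\Gamma_0=\{\{\hat f,h\}:\{\hat f,\{h,h'\}\}\in\Gamma\}$, $\Gamma_1=\{\{\hat f,h'\}:\{\hat f,\{h,h'\}\}\in\Gamma\}$. Weyl family $M(\lambda)=\{\hat h:\{\{f,\lambda f\},\hat h\}\in\Gamma\}$; $\gamma$-field $\gamma(\lambda)=\{\{h,f\}:\{\{f,\lambda f\},\{h,h'\}\}\in\Gamma\text{ for some }h'\}$. $H(\lambda):\operatorname{ran}(A_0-\lambda)\to A_0$, $H(\lambda)k=\{(A_0-\lambda)^{-1}k,\ k+\lambda(A_0-\lambda)^{-1}k\}$. $\mathcal R[\mathcal H]$: holomorphic $\mathcal B(\mathcal H)$-valued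 $F$ on $\mathbb C\setminus\mathbb R$ with $F(\bar\lambda)=F(\lambda)^*$, $\operatorname{Im}F(\lambda)\ge0$ on $\mathbb C_+$. *)

theory Defs
  imports "HOL-Analysis.Analysis"
begin

class chilbert = banach +
  fixes cscale :: "complex \<Rightarrow> 'a \<Rightarrow> 'a"
    and cinner :: "'a \<Rightarrow> 'a \<Rightarrow> complex"
  assumes cscale_add_right: "cscale a (x + y) = cscale a x + cscale a y"
    and cscale_add_left: "cscale (a + b) x = cscale a x + cscale b x"
    and cscale_cscale: "cscale a (cscale b x) = cscale (a * b) x"
    and cscale_one: "cscale 1 x = x"
    and cscale_of_real: "cscale (of_real r) x = scaleR r x"
    and cinner_add_left: "cinner (x + y) z = cinner x z + cinner y z"
    and cinner_cscale_left: "cinner (cscale a x) y = a * cinner x y"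
    and cinner_commute: "cinner y x = cnj (cinner x y)"
    and cinner_norm: "cinner x x = of_real ((norm x)\<^sup>2)"

instantiation prod :: (chilbert, chilbert) chilbert
begin
definition cscale_prod_def: "cscale a p = (cscale a (fst p), cscale a (snd p))"
definition cinner_prod_def: "cinner p q = cinner (fst p) (fst q) + cinner (snd p) (snd q)"
instance
proof
  fix a b :: complex and x y z :: "'a \<times> 'b" and r :: real
  show "cscale a (x + y) = cscale a x + cscale a y"
    by (simp add: cscale_prod_def cscale_add_right)
  show "cscale (a + b) x = cscale a x + cscale b x"
    by (simp add: cscale_prod_def cscale_add_left)
  show "cscale a (cscale b x) = cscale (a * b) x"
    by (simp add: cscale_prod_def cscale_cscale)
  show "cscale 1 x = x" by (simp add: cscale_prod_def cscale_one)
  show "cscale (of_real r) x = scaleR r x"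
    by (simp add: cscale_prod_def cscale_of_real scaleR_prod_def)
  show "cinner (x + y) z = cinner x z + cinner y z"
    by (simp add: cinner_prod_def cinner_add_left)
  show "cinner (cscale a x) y = a * cinner x y"
    by (simp add: cinner_prod_def cscale_prod_def cinner_cscale_left algebra_simps)
  show "cinner y x = cnj (cinner x y)"
    by (simp add: cinner_prod_def cinner_commute[of "fst y"] cinner_commute[of "snd y"])
  show "cinner x x = of_real ((norm x)\<^sup>2)"
    by (simp add: cinner_prod_def cinner_norm norm_prod_def)
qed
end

text \<open>Relations are sets of pairs; dom = Domain, ran = Range (HOL), composition
S T = T O S (HOL relcomp, apply T first).\<close>

definition csubspace :: "'a::chilbert set \<Rightarrow> bool" where
  "csubspace S \<longleftrightarrow> 0 \<in> S \<and> (\<forall>x\<in>S. \<forall>y\<in>S. x + y \<in> S) \<and> (\<forall>c. \<forall>x\<in>S. cscale c x \<in> S)"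

definition adj :: "('a::chilbert \<times> 'b::chilbert) set \<Rightarrow> ('b \<times> 'a) set" where
  "adj T = {(h, k). \<forall>(f, g) \<in> T. cinner g h = cinner f k}"

definition mulr :: "('a::zero \<times> 'b) set \<Rightarrow> 'b set" where
  "mulr T = {g. (0, g) \<in> T}"

definition kerr :: "('a \<times> 'b::zero) set \<Rightarrow> 'a set" where
  "kerr T = {f. (f, 0) \<in> T}"

definition is_operator :: "('a::zero \<times> 'b::zero) set \<Rightarrow> bool" where
  "is_operator T \<longleftrightarrow> mulr T = {0}"

definition bounded_rel :: "('a::real_normed_vector \<times> 'b::real_normed_vector) set \<Rightarrow> bool" where
  "bounded_rel T \<longleftrightarrow> (\<exists>C. \<forall>(f, g) \<in> T. norm g \<le> C * norm f)"

definition Nker :: "complex \<Rightarrow> ('a::chilbert \<times> 'a) set \<Rightarrow> 'a set" where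
  "Nker \<zeta> T = {f. (f, cscale \<zeta> f) \<in> T}"

definition Nhat :: "complex \<Rightarrow> ('a::chilbert \<times> 'a) set \<Rightarrow> ('a \<times> 'a) set" where
  "Nhat \<zeta> T = {(f, cscale \<zeta> f) | f. f \<in> Nker \<zeta> T}"

text \<open>componentwise sum \<open>T1 \<hat>+ T2\<close>\<close>
definition rsum :: "('a::plus \<times> 'b::plus) set \<Rightarrow> ('a \<times> 'b) set \<Rightarrow> ('a \<times> 'b) set" where
  "rsum T1 T2 = {(f + h, g + k) | f g h k. (f, g) \<in> T1 \<and> (h, k) \<in> T2}"

text \<open>operator-like sum \<open>T1 + T2\<close>\<close>
definition opsum :: "('a \<times> 'b::plus) set \<Rightarrow> ('a \<times> 'b) set \<Rightarrow> ('a \<times> 'b) set" where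
  "opsum T1 T2 = {(f, g + k) | f g k. (f, g) \<in> T1 \<and> (f, k) \<in> T2}"

definition smult_rel :: "complex \<Rightarrow> ('a \<times> 'b::chilbert) set \<Rightarrow> ('a \<times> 'b) set" where
  "smult_rel c T = {(f, cscale c g) | f g. (f, g) \<in> T}"

definition resolv :: "('a::chilbert \<times> 'a) set \<Rightarrow> complex \<Rightarrow> ('a \<times> 'a) set" where
  "resolv S \<zeta> = {(g - cscale \<zeta> f, f) | f g. (f, g) \<in> S}"

definition bp0 :: "(('a \<times> 'a) \<times> ('b \<times> 'b)) set \<Rightarrow> (('a \<times> 'a) \<times> 'b) set" where
  "bp0 \<Gamma> = {(fh, h) | fh h h'. (fh, (h, h')) \<in> \<Gamma>}"

definition bp1 :: "(('a \<times> 'a) \<times> ('b \<times> 'b)) set \<Rightarrow> (('a \<times> 'a) \<times> 'b) set" where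
  "bp1 \<Gamma> = {(fh, h') | fh h h'. (fh, (h, h')) \<in> \<Gamma>}"

definition bpA0 :: "(('a::zero \<times> 'a) \<times> ('b::zero \<times> 'b)) set \<Rightarrow> ('a \<times> 'a) set" where
  "bpA0 \<Gamma> = kerr (bp0 \<Gamma>)"

definition gammaf :: "(('a::chilbert \<times> 'a) \<times> ('b::chilbert \<times> 'b)) set \<Rightarrow> complex \<Rightarrow> ('b \<times> 'a) set" where
  "gammaf \<Gamma> \<zeta> = {(h, f) | f h h'. ((f, cscale \<zeta> f), (h, h')) \<in> \<Gamma>}"

definition weyl :: "(('a::chilbert \<times> 'a) \<times> ('b::chilbert \<times> 'b)) set \<Rightarrow> complex \<Rightarrow> ('b \<times> 'b) set" where
  "weyl \<Gamma> \<zeta> = {hh | f hh. ((f, cscale \<zeta> f), hh) \<in> \<Gamma>}"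

text \<open>\<open>H(\<zeta>) k = {(A0 - \<zeta>)\<^sup>-\<^sup>1 k, k + \<zeta>(A0 - \<zeta>)\<^sup>-\<^sup>1 k}\<close>, k in ran(A0 - \<zeta>)\<close>
definition Hrel :: "('a::chilbert \<times> 'a) set \<Rightarrow> complex \<Rightarrow> ('a \<times> ('a \<times> 'a)) set" where
  "Hrel A0 \<zeta> = {(k, (f, k + cscale \<zeta> f)) | k f. (k, f) \<in> resolv A0 \<zeta>}"

definition AB_boundary_pair ::
  "('a::chilbert \<times> 'a) set \<Rightarrow> (('a \<times> 'a) \<times> ('b::chilbert \<times> 'b)) set \<Rightarrow> bool" where
  "AB_boundary_pair A \<Gamma> \<longleftrightarrow>
     csubspace \<Gamma> \<and> Domain \<Gamma> \<subseteq> adj A \<and> adj A \<subseteq> closure (Domain \<Gamma>) \<and>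
     (\<forall>f f' h h' g g' k k'. ((f, f'), (h, h')) \<in> \<Gamma> \<longrightarrow> ((g, g'), (k, k')) \<in> \<Gamma> \<longrightarrow>
         cinner f' g - cinner f g' = cinner h' k - cinner h k') \<and>
     closure (Range (bp0 \<Gamma>)) = UNIV \<and>
     adj (bpA0 \<Gamma>) = bpA0 \<Gamma>"

definition closed_symmetric :: "('a::chilbert \<times> 'a) set \<Rightarrow> bool" where
  "closed_symmetric A \<longleftrightarrow> csubspace A \<and> closed A \<and> A \<subseteq> adj A"

definition ImM :: "'a set \<Rightarrow> ('a::chilbert \<times> 'a) set \<Rightarrow> ('a \<times> 'a) set" where
  "ImM D M = {(h, cscale (1 / (2 * \<i>)) (k - k')) | h k k'. h \<in> D \<and> (h, k) \<in> M \<and> (h, k') \<in> adj M}"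

definition ReM :: "'a set \<Rightarrow> ('a::chilbert \<times> 'a) set \<Rightarrow> ('a \<times> 'a) set" where
  "ReM D M = {(h, cscale (1 / 2) (k + k')) | h k k'. h \<in> D \<and> (h, k) \<in> M \<and> (h, k') \<in> adj M}"

definition bounded_clinear_map :: "('a::chilbert \<Rightarrow> 'b::chilbert) \<Rightarrow> bool" where
  "bounded_clinear_map G \<longleftrightarrow> (\<forall>x y. G (x + y) = G x + G y) \<and> (\<forall>c x. G (cscale c x) = cscale c (G x))
     \<and> (\<exists>K. \<forall>x. norm (G x) \<le> norm x * K)"

definition graph :: "('a \<Rightarrow> 'b) \<Rightarrow> ('a \<times> 'b) set" where
  "graph G = {(x, G x) | x. True}"

text \<open>\<open>F\<close> (relation valued, considered on \<open>\<complex>\<setminus>\<real>\<close>) belongs to \<open>\<R>[\<H>]\<close>: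
  F(z) is (the graph of) an everywhere defined bounded operator, F is holomorphic in
  operator norm, \<open>F(\<bar>z) = F(z)\<^sup>*\<close>, and \<open>Im F(z) \<ge> 0\<close> for Im z > 0.\<close>
definition nevanlinna :: "(complex \<Rightarrow> ('a::chilbert \<times> 'a) set) \<Rightarrow> bool" where
  "nevanlinna F \<longleftrightarrow> (\<exists>G. (\<forall>z. Im z \<noteq> 0 \<longrightarrow> F z = graph (G z) \<and> bounded_clinear_map (G z)) \<and>
     (\<forall>z. Im z \<noteq> 0 \<longrightarrow> (\<exists>D. bounded_clinear_map D \<and>
         ((\<lambda>w. onorm (\<lambda>x. cscale (inverse (w - z)) (G w x - G z x) - D x)) \<longlongrightarrow> 0) (at z))) \<and>
     (\<forall>z. Im z \<noteq> 0 \<longrightarrow> F (cnj z) = adj (F z)) \<and>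
     (\<forall>z. Im z > 0 \<longrightarrow> (\<forall>h. Im (cinner (G z h) h) \<ge> 0)))"

end

theory Submission
  imports Defs
begin


lemma cinner_add_right: "cinner x (y + z) = cinner x y + cinner x (z::'a::chilbert)"
  by (metis cinner_commute cinner_add_left complex_cnj_add)

lemma cinner_cscale_right: "cinner x (cscale a y) = cnj a * cinner x (y::'a::chilbert)"
  by (metis cinner_commute cinner_cscale_left complex_cnj_mult complex_cnj_cnj)

lemma cinner_zero_left[simp]: "cinner 0 (y::'a::chilbert) = 0"
  using cinner_add_left[of 0 0 y] by simp

lemma cinner_zero_right[simp]: "cinner y (0::'a::chilbert) = 0"
  using cinner_commute[of y 0] by simp

lemma cscale_minus1: "cscale (-1) (x::'a::chilbert) = - x"
  using cscale_of_real[of "-1" x] by simp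

lemma cinner_minus_left: "cinner (- x) (y::'a::chilbert) = - cinner x y"
  using cinner_cscale_left[of "-1" x y] by (simp add: cscale_minus1)

lemma cinner_minus_right: "cinner y (- x::'a::chilbert) = - cinner y x"
  using cinner_commute[of y "-x"] cinner_commute[of y x] by (simp add: cinner_minus_left)

lemma cinner_diff_left: "cinner (x - y) (z::'a::chilbert) = cinner x z - cinner y z"
  using cinner_add_left[of x "-y" z] cinner_minus_left[of y z] by simp

lemma cinner_diff_right: "cinner z (x - y::'a::chilbert) = cinner z x - cinner z y"
  using cinner_add_right[of z x "-y"] cinner_minus_right[of z y] by simp

lemma cinner_scaleR_left: "cinner (scaleR r x) (y::'a::chilbert) = of_real r * cinner x y"
  using cinner_cscale_left[of "of_real r" x y] by (simp add: cscale_of_real)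

lemma cinner_scaleR_right: "cinner y (scaleR r x::'a::chilbert) = of_real r * cinner y x"
  using cinner_cscale_right[of y "of_real r" x] by (simp add: cscale_of_real)

lemma cinner_self: "cinner x (x::'a::chilbert) = of_real ((norm x)^2)"
  by (rule cinner_norm)

lemma cinner_self_eq_0: "cinner x x = 0 \<longleftrightarrow> (x::'a::chilbert) = 0"
  by (simp add: cinner_norm)

lemma cscale_zero_right[simp]: "cscale c (0::'a::chilbert) = 0"
  using cscale_add_right[of c 0 0] by simp

lemma cscale_zero_left[simp]: "cscale 0 (x::'a::chilbert) = 0"
  using cscale_of_real[of 0 x] by simp

lemma cscale_minus_right: "cscale c (- x::'a::chilbert) = - cscale c x"
  using cscale_cscale[of c "-1" x] cscale_cscale[of "-1" c x] by (simp add: cscale_minus1)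

lemma cscale_diff_right: "cscale c (x - y::'a::chilbert) = cscale c x - cscale c y"
  using cscale_add_right[of c x "-y"] cscale_minus_right[of c y] by simp

lemma cscale_diff_left: "cscale (a - b) (x::'a::chilbert) = cscale a x - cscale b x"
  using cscale_add_left[of "a-b" b x] by (simp add: eq_diff_eq)

lemma cscale_minus_left: "cscale (- a) (x::'a::chilbert) = - cscale a x"
  using cscale_cscale[of "-1" a x] by (simp add: cscale_minus1)

lemma cscale_scaleR_comm: "cscale c (scaleR r x) = scaleR r (cscale c (x::'a::chilbert))"
  by (simp add: cscale_of_real[symmetric] cscale_cscale mult.commute)

lemma norm_cscale: "norm (cscale c x) = cmod c * norm (x::'a::chilbert)"
proof -
  have "of_real ((norm (cscale c x))^2) = cinner (cscale c x) (cscale c x)" by (simp only: cinner_norm)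
  also have "\<dots> = c * cnj c * cinner x x"
    by (simp add: cinner_cscale_left cinner_cscale_right)
  also have "\<dots> = c * cnj c * of_real ((norm x)^2)"
    by (simp only: cinner_norm)
  also have "\<dots> = of_real ((cmod c * norm x)^2)"
    by (simp only: complex_norm_square power_mult_distrib of_real_mult)
  finally have "(norm (cscale c x))^2 = (cmod c * norm x)^2" using of_real_eq_iff by blast
  thus ?thesis by (simp add: power2_eq_iff_nonneg)
qed

lemma cauchy_schwarz: "cmod (cinner x y) \<le> norm x * norm (y::'a::chilbert)"
proof (cases "y = 0")
  case True thus ?thesis by simp
next
  case False
  define t where "t = cinner x y / of_real ((norm y)^2)"
  have ny: "norm y > 0" using False by simp
  have "0 \<le> (norm (x - cscale t y))^2" by simp
  have "of_real ((norm (x - cscale t y))^2) = cinner (x - cscale t y) (x - cscale t y)"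
    by (simp add: cinner_norm)
  also have "\<dots> = cinner x x - cnj t * cinner x y - t * cinner y x + t * cnj t * cinner y y"
    by (simp add: cinner_diff_left cinner_diff_right cinner_cscale_left cinner_cscale_right algebra_simps)
  also have "\<dots> = of_real ((norm x)^2) - cinner x y * cnj (cinner x y) / of_real ((norm y)^2)"
    using ny by (simp add: t_def cinner_norm cinner_commute[of y x] field_simps power2_eq_square)
  also have "\<dots> = of_real ((norm x)^2 - (cmod (cinner x y))^2 / (norm y)^2)"
    by (simp only: complex_norm_square of_real_diff of_real_divide)
  finally have "(norm (x - cscale t y))^2 = (norm x)^2 - (cmod (cinner x y))^2 / (norm y)^2"
    using of_real_eq_iff by blast
  hence "(cmod (cinner x y))^2 / (norm y)^2 \<le> (norm x)^2"
    by (metis diff_ge_0_iff_ge zero_le_power2)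
  hence "(cmod (cinner x y))^2 \<le> (norm x * norm y)^2" using ny
    by (simp add: pos_divide_le_eq power_mult_distrib)
  thus ?thesis by (simp add: power2_le_iff_abs_le)
qed

lemma bounded_bilinear_cinner: "bounded_bilinear (cinner :: 'a::chilbert \<Rightarrow> 'a \<Rightarrow> complex)"
proof
  fix a a' b b' :: 'a and r :: real
  show "cinner (a + a') b = cinner a b + cinner a' b" by (rule cinner_add_left)
  show "cinner a (b + b') = cinner a b + cinner a b'" by (rule cinner_add_right)
  show "cinner (scaleR r a) b = scaleR r (cinner a b)" by (simp add: cinner_scaleR_left scaleR_conv_of_real)
  show "cinner a (scaleR r b) = scaleR r (cinner a b)" by (simp add: cinner_scaleR_right scaleR_conv_of_real)
  show "\<exists>K. \<forall>a b. norm (cinner a (b::'a)) \<le> norm a * norm b * K"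
    by (rule exI[of _ 1]) (simp add: cauchy_schwarz)
qed

lemma bounded_bilinear_cscale: "bounded_bilinear (cscale :: complex \<Rightarrow> 'a::chilbert \<Rightarrow> 'a)"
proof
  fix a a' :: complex and b b' :: 'a and r :: real
  show "cscale (a + a') b = cscale a b + cscale a' b" by (rule cscale_add_left)
  show "cscale a (b + b') = cscale a b + cscale a b'" by (rule cscale_add_right)
  show "cscale (scaleR r a) b = scaleR r (cscale a b)"
    by (metis cscale_cscale cscale_of_real scaleR_conv_of_real)
  show "cscale a (scaleR r b) = scaleR r (cscale a b)" by (rule cscale_scaleR_comm)
  show "\<exists>K. \<forall>a b. norm (cscale a (b::'a)) \<le> norm a * norm b * K"
    by (rule exI[of _ 1]) (simp add: norm_cscale)
qed


lemmas tendsto_cinner[tendsto_intros] = bounded_bilinear.tendsto[OF bounded_bilinear_cinner]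
lemmas continuous_on_cinner[continuous_intros] = bounded_bilinear.continuous_on[OF bounded_bilinear_cinner]
lemmas tendsto_cscale[tendsto_intros] = bounded_bilinear.tendsto[OF bounded_bilinear_cscale]
lemmas continuous_on_cscale[continuous_intros] = bounded_bilinear.continuous_on[OF bounded_bilinear_cscale]
lemmas continuous_cinner[continuous_intros] = bounded_bilinear.continuous[OF bounded_bilinear_cinner]
lemmas continuous_cscale[continuous_intros] = bounded_bilinear.continuous[OF bounded_bilinear_cscale]





lemma closed_subset_closure: "closed T \<Longrightarrow> S \<subseteq> T \<Longrightarrow> closure S \<subseteq> T"
  by (simp add: closure_minimal)

lemma dense_closed_all: "closure S = UNIV \<Longrightarrow> closed {x. P x} \<Longrightarrow> (\<And>x. x \<in> S \<Longrightarrow> P x) \<Longrightarrow> P y"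
  using closure_minimal[of S "{x. P x}"] by auto

lemma dense_le:
  fixes f g :: "'a::topological_space \<Rightarrow> real"
  assumes "closure S = UNIV" "continuous_on UNIV f" "continuous_on UNIV g" "\<And>x. x \<in> S \<Longrightarrow> f x \<le> g x"
  shows "f y \<le> g y"
  using dense_closed_all[OF assms(1) closed_Collect_le[OF assms(2,3)]] assms(4) by blast

lemma dense_eq:
  fixes f g :: "'a::topological_space \<Rightarrow> 'b::t2_space"
  assumes "closure S = UNIV" "continuous_on UNIV f" "continuous_on UNIV g" "\<And>x. x \<in> S \<Longrightarrow> f x = g x"
  shows "f y = g y"
  using dense_closed_all[OF assms(1) closed_Collect_eq[OF assms(2,3)]] assms(4) by blast

lemma dense_zero:
  fixes x :: "'a::chilbert"
  assumes "closure S = UNIV" "\<And>y. y \<in> S \<Longrightarrow> cinner y x = 0"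
  shows "x = 0"
proof -
  have "cinner x x = 0"
    by (rule dense_eq[OF assms(1), where f="\<lambda>y. cinner y x" and g="\<lambda>y. 0"])
       (auto intro!: continuous_intros assms(2))
  thus ?thesis by (simp add: cinner_self_eq_0)
qed

lemma norm_le_from_cinner:
  fixes v :: "'a::chilbert"
  assumes "\<And>k. cmod (cinner v k) \<le> c * norm k" "0 \<le> c"
  shows "norm v \<le> c"
proof (cases "v = 0")
  case True
  thus ?thesis using assms by simp
next
  case False
  have "cmod (cinner v v) = (norm v)^2" by (simp only: cinner_norm norm_of_real) simp
  hence "(norm v)^2 \<le> c * norm v" using assms(1)[of v] by simp
  thus ?thesis using False by (simp add: power2_eq_square)
qed

lemma norm_le_from_cinner_dense:
  fixes v :: "'a::chilbert"
  assumes "closure S = UNIV" "\<And>k. k \<in> S \<Longrightarrow> cmod (cinner v k) \<le> c * norm k" "0 \<le> c"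
  shows "norm v \<le> c"
proof (rule norm_le_from_cinner[OF _ assms(3)])
  fix k
  show "cmod (cinner v k) \<le> c * norm k"
    by (rule dense_le[OF assms(1), where f="\<lambda>k. cmod (cinner v k)" and g="\<lambda>k. c * norm k"])
       (auto intro!: continuous_intros assms(2))
qed

lemma norm_sq_diff_proj:
  fixes u s :: "'a::chilbert"
  assumes "s \<noteq> 0"
  defines "t \<equiv> cinner u s / of_real ((norm s)^2)"
  shows "(norm (u - cscale t s))^2 = (norm u)^2 - (cmod (cinner u s))^2 / (norm s)^2"
proof -
  have ns: "norm s > 0" using assms by simp
  have "of_real ((norm (u - cscale t s))^2) = cinner (u - cscale t s) (u - cscale t s)"
    by (simp only: cinner_norm)
  also have "\<dots> = cinner u u - cnj t * cinner u s - t * cinner s u + t * cnj t * cinner s s"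
    by (simp add: cinner_diff_left cinner_diff_right cinner_cscale_left cinner_cscale_right algebra_simps)
  also have "\<dots> = of_real ((norm u)^2) - cinner u s * cnj (cinner u s) / of_real ((norm s)^2)"
    using ns by (simp add: t_def cinner_norm cinner_commute[of s u] field_simps power2_eq_square)
  also have "\<dots> = of_real ((norm u)^2 - (cmod (cinner u s))^2 / (norm s)^2)"
    by (simp only: complex_norm_square of_real_diff of_real_divide)
  finally show ?thesis using of_real_eq_iff by blast
qed

lemma parallelogram:
  fixes a b :: "'a::chilbert"
  shows "(norm (a + b))^2 + (norm (a - b))^2 = 2 * (norm a)^2 + 2 * (norm b)^2"
proof -
  have "of_real ((norm (a + b))^2 + (norm (a - b))^2) = cinner (a+b) (a+b) + cinner (a-b) (a-b)"
    by (simp only: cinner_norm of_real_add)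
  also have "\<dots> = 2 * cinner a a + 2 * cinner b b"
    by (simp add: cinner_diff_left cinner_diff_right cinner_add_left cinner_add_right algebra_simps)
  also have "\<dots> = of_real (2 * (norm a)^2 + 2 * (norm b)^2)"
    by (simp only: cinner_norm of_real_add of_real_mult of_real_numeral)
  finally show ?thesis using of_real_eq_iff by blast
qed


lemma cs_zero: "csubspace S \<Longrightarrow> 0 \<in> S" by (simp add: csubspace_def)
lemma cs_add: "csubspace S \<Longrightarrow> x \<in> S \<Longrightarrow> y \<in> S \<Longrightarrow> x + y \<in> S" by (simp add: csubspace_def)
lemma cs_scale: "csubspace S \<Longrightarrow> x \<in> S \<Longrightarrow> cscale c x \<in> S" by (simp add: csubspace_def)
lemma cs_scaleR: "csubspace S \<Longrightarrow> x \<in> S \<Longrightarrow> scaleR r x \<in> S"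
  by (metis cs_scale cscale_of_real)
lemma cs_neg: "csubspace S \<Longrightarrow> x \<in> S \<Longrightarrow> - x \<in> S"
  by (metis cs_scale cscale_minus1)
lemma cs_diff: "csubspace S \<Longrightarrow> x \<in> S \<Longrightarrow> y \<in> S \<Longrightarrow> x - y \<in> S"
  by (metis cs_add cs_neg diff_conv_add_uminus)

lemma projection:
  fixes x :: "'a::chilbert"
  assumes S: "csubspace S" "closed S"
  shows "\<exists>p\<in>S. \<forall>s\<in>S. cinner (x - p) s = 0"
proof -
  have ne: "S \<noteq> {}" using cs_zero[OF S(1)] by blast
  define d where "d = infdist x S"
  have d0: "0 \<le> d" by (simp add: d_def infdist_nonneg)
  have "\<forall>n::nat. \<exists>s\<in>S. dist x s < d + 1 / real (Suc n)"
  proof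
    fix n :: nat
    have dI: "d = (INF a\<in>S. dist x a)" using ne by (simp add: d_def infdist_notempty)
    have "d < d + 1 / real (Suc n)" by simp
    hence "(INF a\<in>S. dist x a) < d + 1 / real (Suc n)"
      using dI by metis
    thus "\<exists>s\<in>S. dist x s < d + 1 / real (Suc n)"
      using ne by (subst (asm) cINF_less_iff) auto
  qed
  then obtain s where sS: "\<And>n. s n \<in> S" and sd: "\<And>n. dist x (s n) < d + 1 / real (Suc n)"
    by metis
  have dle: "d \<le> dist x q" if "q \<in> S" for q
    using that by (simp add: d_def infdist_le)
  have key: "(dist (s m) (s n))^2 \<le> 4 * (2 * d + 1) / real (Suc N)" if "N \<le> m" "N \<le> n" for m n N
  proof -
    define a where "a = x - s m"
    define b where "b = x - s n"
    define mid where "mid = scaleR (1/2) (s m + s n)"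
    have midS: "mid \<in> S" unfolding mid_def by (intro cs_scaleR cs_add S sS)
    have "a + b = scaleR 2 (x - mid)" by (simp add: a_def b_def mid_def algebra_simps scaleR_2)
    hence nab: "norm (a + b) = 2 * dist x mid" by (simp add: dist_norm)
    have "d \<le> dist x mid" using dle[OF midS] .
    hence d4: "4 * d^2 \<le> (norm (a + b))^2" using d0 nab
      by (simp add: power_mult_distrib power_mono)
    have em: "1 / real (Suc m) \<le> 1 / real (Suc N)" using that by (simp add: frac_le)
    have en: "1 / real (Suc n) \<le> 1 / real (Suc N)" using that by (simp add: frac_le)
    have e1: "1 / real (Suc N) \<le> 1" by simp
    define e where "e = 1 / real (Suc N)"
    have e0: "0 \<le> e" by (simp add: e_def)
    have na: "norm a \<le> d + e" using sd[of m] em by (simp add: a_def e_def dist_norm)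
    have nb: "norm b \<le> d + e" using sd[of n] en by (simp add: b_def e_def dist_norm)
    have "(norm a)^2 \<le> (d + e)^2" using na by (simp add: power_mono)
    moreover have "(norm b)^2 \<le> (d + e)^2" using nb by (simp add: power_mono)
    moreover have "(norm (a - b))^2 = 2 * (norm a)^2 + 2 * (norm b)^2 - (norm (a + b))^2"
      using parallelogram[of a b] by simp
    moreover have "a - b = s n - s m" by (simp add: a_def b_def)
    ultimately have "(norm (s n - s m))^2 \<le> 4 * (d + e)^2 - 4 * d^2" using d4 by simp
    also have "\<dots> = 4 * e * (2 * d + e)" by (simp add: power2_eq_square algebra_simps)
    also have "\<dots> \<le> 4 * e * (2 * d + 1)" using e0 e1 unfolding e_def[symmetric] by (intro mult_left_mono) auto
    finally show ?thesis by (simp add: dist_norm norm_minus_commute e_def)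
  qed
  have "Cauchy s"
  proof (rule metric_CauchyI)
    fix e :: real assume e: "0 < e"
    obtain N :: nat where N: "4 * (2 * d + 1) / e^2 < real N" using reals_Archimedean2 by blast
    have "4 * (2 * d + 1) / real (Suc N) < e^2"
      using N e d0 by (simp add: field_simps) (smt (verit) zero_less_power)
    show "\<exists>M. \<forall>m\<ge>M. \<forall>n\<ge>M. dist (s m) (s n) < e"
    proof (intro exI allI impI)
      fix m n assume "N \<le> m" "N \<le> n"
      hence "(dist (s m) (s n))^2 < e^2" using key[of N m n] \<open>4 * (2 * d + 1) / real (Suc N) < e^2\<close> by linarith
      thus "dist (s m) (s n) < e" using e by (simp add: power_less_imp_less_base)
    qed
  qed
  then obtain p where lim: "s \<longlonglongrightarrow> p" using Cauchy_convergent_iff convergent_def by blast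
  have pS: "p \<in> S" using closed_sequentially[OF S(2) _ lim] sS by blast
  have dp: "dist x p \<le> d"
  proof (rule field_le_epsilon)
    fix e :: real assume e: "0 < e"
    obtain N1 where N1: "\<forall>n\<ge>N1. dist (s n) p < e/2" using lim e
      by (metis LIMSEQ_iff_nz half_gt_zero dist_commute dist_norm)
    obtain N2 :: nat where N2: "1 / real (Suc N2) < e/2"
      using e by (metis half_gt_zero nat_approx_posE One_nat_def)
    define n where "n = max N1 N2"
    have "dist x p \<le> dist x (s n) + dist (s n) p" by (rule dist_triangle)
    also have "\<dots> < d + 1 / real (Suc n) + e/2" using sd[of n] N1[rule_format, of n] by (simp add: n_def)
    also have "1 / real (Suc n) \<le> 1 / real (Suc N2)" by (simp add: n_def frac_le)
    finally show "dist x p \<le> d + e" using N2 by linarith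
  qed
  have mini: "norm (x - p) \<le> norm (x - q)" if "q \<in> S" for q
    using dp dle[OF that] by (simp add: dist_norm)
  show ?thesis
  proof (intro bexI[OF _ pS] ballI)
    fix q assume qS: "q \<in> S"
    show "cinner (x - p) q = 0"
    proof (rule ccontr)
      assume ne0: "cinner (x - p) q \<noteq> 0"
      hence q0: "q \<noteq> 0" by auto
      define t where "t = cinner (x - p) q / of_real ((norm q)^2)"
      have "p + cscale t q \<in> S" by (intro cs_add cs_scale S pS qS)
      hence "norm (x - p) \<le> norm (x - (p + cscale t q))" by (rule mini)
      hence "(norm (x - p))^2 \<le> (norm ((x - p) - cscale t q))^2"
        by (simp add: power_mono algebra_simps)
      also have "\<dots> = (norm (x - p))^2 - (cmod (cinner (x - p) q))^2 / (norm q)^2"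
        using norm_sq_diff_proj[OF q0, of "x - p"] by (simp add: t_def)
      finally have "(cmod (cinner (x - p) q))^2 / (norm q)^2 \<le> 0" by simp
      moreover have "(cmod (cinner (x - p) q))^2 / (norm q)^2 > 0" using ne0 q0 by simp
      ultimately show False by simp
    qed
  qed
qed

lemma closed_subspace_perp_trivial:
  fixes S :: "'a::chilbert set"
  assumes "csubspace S" "closed S" "\<And>y. (\<forall>s\<in>S. cinner s y = 0) \<Longrightarrow> y = 0"
  shows "S = UNIV"
proof -
  have "x \<in> S" for x
  proof -
    obtain p where pS: "p \<in> S" and o: "\<forall>s\<in>S. cinner (x - p) s = 0"
      using projection[OF assms(1,2)] by blast
    have "\<forall>s\<in>S. cinner s (x - p) = 0" using o by (metis cinner_commute complex_cnj_zero)
    hence "x - p = 0" using assms(3) by blast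
    thus ?thesis using pS by simp
  qed
  thus ?thesis by blast
qed


lemma adj_iff: "(h, k) \<in> adj T \<longleftrightarrow> (\<forall>f g. (f, g) \<in> T \<longrightarrow> cinner g h = cinner f k)"
  by (auto simp: adj_def)

lemma adjD: "(h, k) \<in> adj T \<Longrightarrow> (f, g) \<in> T \<Longrightarrow> cinner g h = cinner f k"
  by (auto simp: adj_def)

lemma adjI: "(\<And>f g. (f, g) \<in> T \<Longrightarrow> cinner g h = cinner f k) \<Longrightarrow> (h, k) \<in> adj T"
  by (auto simp: adj_def)

lemma adj_antimono: "S \<subseteq> T \<Longrightarrow> adj T \<subseteq> adj S"
  by (auto simp: adj_def)

lemma sub_adj_iff: "S \<subseteq> adj T \<longleftrightarrow> T \<subseteq> adj S"
proof -
  have "S \<subseteq> adj T \<longleftrightarrow> (\<forall>h k f g. (h,k) \<in> S \<longrightarrow> (f,g) \<in> T \<longrightarrow> cinner g h = cinner f k)"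
    by (auto simp: adj_def)
  also have "\<dots> \<longleftrightarrow> (\<forall>h k f g. (h,k) \<in> S \<longrightarrow> (f,g) \<in> T \<longrightarrow> cinner k f = cinner h g)"
    by (metis cinner_commute)
  also have "\<dots> \<longleftrightarrow> T \<subseteq> adj S" by (auto simp: adj_def)
  finally show ?thesis .
qed

lemma closed_adj_set: "closed {p :: 'a::chilbert \<times> 'b::chilbert. cinner g (fst p) = cinner f (snd p)}"
  by (intro closed_Collect_eq continuous_intros)

lemma closed_adj: "closed (adj T)"
proof -
  have "adj T = (\<Inter>fg\<in>T. {p. cinner (snd fg) (fst p) = cinner (fst fg) (snd p)})"
    by (auto simp: adj_def) (metis fst_conv snd_conv)+
  thus ?thesis by (auto intro!: closed_INT closed_adj_set)
qed

lemma csubspace_adj: "csubspace (adj T)"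
  unfolding csubspace_def
proof (intro conjI ballI allI)
  show "0 \<in> adj T" by (auto simp: adj_def zero_prod_def)
next
  fix x y assume x: "x \<in> adj T" and y: "y \<in> adj T"
  obtain x1 x2 y1 y2 where xy: "x = (x1, x2)" "y = (y1, y2)" by fastforce
  show "x + y \<in> adj T" unfolding xy plus_prod_def fst_conv snd_conv
  proof (rule adjI)
    fix f g assume "(f, g) \<in> T"
    thus "cinner g (x1 + y1) = cinner f (x2 + y2)"
      using adjD[OF x[unfolded xy(1)]] adjD[OF y[unfolded xy(2)]] by (simp add: cinner_add_right)
  qed
next
  fix c x assume x: "x \<in> adj T"
  obtain x1 x2 where xy: "x = (x1, x2)" by fastforce
  show "cscale c x \<in> adj T" unfolding xy cscale_prod_def fst_conv snd_conv
  proof (rule adjI)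
    fix f g assume "(f, g) \<in> T"
    thus "cinner g (cscale c x1) = cinner f (cscale c x2)"
      using adjD[OF x[unfolded xy(1)]] by (simp add: cinner_cscale_right)
  qed
qed

lemma adj_closure: "adj (closure T) = adj T"
proof
  show "adj (closure T) \<subseteq> adj T" by (rule adj_antimono) (rule closure_subset)
  show "adj T \<subseteq> adj (closure T)"
  proof
    fix p assume p: "p \<in> adj T"
    obtain h k where hk: "p = (h, k)" by fastforce
    have "closure T \<subseteq> {q. cinner (snd q) h = cinner (fst q) k}"
      by (rule closure_minimal) (use p hk in \<open>auto simp: adj_def intro!: closed_Collect_eq continuous_intros\<close>)
    thus "p \<in> adj (closure T)" using hk by (auto simp: adj_def)
  qed
qed

lemma adj_adj_closed:
  fixes A :: "('a::chilbert \<times> 'a) set"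
  assumes "csubspace A" "closed A"
  shows "adj (adj A) \<subseteq> A"
proof
  fix x assume x: "x \<in> adj (adj A)"
  obtain p where pA: "p \<in> A" and o: "\<forall>s\<in>A. cinner (x - p) s = 0"
    using projection[OF assms] by blast
  define q where "q = x - p"
  obtain q1 q2 where q: "q = (q1, q2)" by fastforce
  obtain f f' where xf: "x = (f, f')" by fastforce
  have "(q2, - q1) \<in> adj A"
  proof (rule adjI)
    fix a a' assume "(a, a') \<in> A"
    hence "cinner q (a, a') = 0" using o q_def by auto
    hence "cinner q1 a + cinner q2 a' = 0" by (simp add: q cinner_prod_def)
    hence "cinner a q1 + cinner a' q2 = 0" by (metis cinner_commute complex_cnj_add complex_cnj_zero)
    thus "cinner a' q2 = cinner a (- q1)" by (simp add: cinner_minus_right eq_neg_iff_add_eq_0 add.commute)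
  qed
  hence "cinner (- q1) f = cinner q2 f'" using adjD[OF x[unfolded xf]] by blast
  hence "cinner q1 f + cinner q2 f' = 0" by (simp add: cinner_minus_left) (metis add.commute neg_eq_iff_add_eq_0)
  hence qx: "cinner q x = 0" by (simp add: xf q cinner_prod_def)
  have "cinner q p = 0" using o pA q_def by (metis cinner_commute complex_cnj_zero)
  hence "cinner q q = 0" using qx by (simp add: q_def cinner_diff_right)
  hence "q = 0" by (simp add: cinner_self_eq_0)
  thus "x \<in> A" using pA q_def by simp
qed

lemma baire_nat:
  fixes F :: "nat \<Rightarrow> 'a::banach set"
  assumes "\<And>n. closed (F n)" "\<Union>(range F) = UNIV"
  shows "\<exists>n x r. r > 0 \<and> ball x r \<subseteq> F n"
proof (rule ccontr)
  assume no: "\<not> ?thesis"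
  have "interior (F n) = {}" for n
  proof (rule ccontr)
    assume "interior (F n) \<noteq> {}"
    then obtain x where "x \<in> interior (F n)" by blast
    then obtain e where "e > 0" "ball x e \<subseteq> F n" by (metis mem_interior)
    thus False using no by blast
  qed
  hence "Met_TC.mtopology interior_of \<Union>(range F) = {}"
    by (intro Met_TC.metric_Baire_category_alt) (auto simp: complete_UNIV assms(1))
  thus False using assms(2) by simp
qed

lemma unif_bound:
  fixes S :: "('b::real_normed_vector \<times> 'a::chilbert) set"
  assumes "\<And>k. \<exists>c. \<forall>h x. (h, x) \<in> S \<longrightarrow> cmod (cinner x k) \<le> c * norm h"
  shows "\<exists>C. \<forall>h x. (h, x) \<in> S \<longrightarrow> norm x \<le> C * norm h"
proof -
  define F where "F n = {k. \<forall>h x. (h, x) \<in> S \<longrightarrow> cmod (cinner x k) \<le> real n * norm h}" for n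
  have cl: "closed (F n)" for n
  proof -
    have "F n = (\<Inter>p\<in>S. {k. cmod (cinner (snd p) k) \<le> real n * norm (fst p)})"
      by (auto simp: F_def) (metis fst_conv snd_conv)+
    thus ?thesis by (auto intro!: closed_INT closed_Collect_le continuous_intros)
  qed
  have un: "\<Union>(range F) = UNIV"
  proof (safe)
    fix k
    obtain c where c: "\<forall>h x. (h, x) \<in> S \<longrightarrow> cmod (cinner x k) \<le> c * norm h" using assms by blast
    obtain n where n: "c \<le> real n" using real_arch_simple by blast
    have "k \<in> F n" unfolding F_def
    proof (safe)
      fix h x assume "(h, x) \<in> S"
      hence "cmod (cinner x k) \<le> c * norm h" using c by blast
      also have "\<dots> \<le> real n * norm h" using n by (simp add: mult_right_mono)
      finally show "cmod (cinner x k) \<le> real n * norm h" .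
    qed
    thus "k \<in> \<Union>(range F)" by blast
  qed auto
  obtain n k0 r where r: "r > 0" and b: "ball k0 r \<subseteq> F n" using baire_nat[OF cl un] by blast
  have "norm x \<le> (4 * real n / r) * norm h" if hx: "(h, x) \<in> S" for h x
  proof (cases "x = 0")
    case True thus ?thesis using r by simp
  next
    case False
    hence nx: "norm x > 0" by simp
    define k where "k = scaleR (r / (2 * norm x)) x"
    have nk: "norm k = r / 2" using nx r by (simp add: k_def)
    have "k0 + k \<in> ball k0 r" using nk r by (simp add: dist_norm)
    hence "k0 + k \<in> F n" using b by blast
    hence a1: "cmod (cinner x (k0 + k)) \<le> real n * norm h" using hx by (simp add: F_def)
    have "k0 \<in> F n" using b r centre_in_ball by blast
    hence a2: "cmod (cinner x k0) \<le> real n * norm h" using hx by (simp add: F_def)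
    have "cinner x k = of_real (r / (2 * norm x)) * cinner x x" by (simp add: k_def cinner_scaleR_right)
    also have "\<dots> = of_real (r / 2 * norm x)" using nx
      by (simp add: cinner_norm power2_eq_square)
    finally have ck: "cinner x k = of_real (r / 2 * norm x)" .
    have "cmod (cinner x k) = r / 2 * norm x" unfolding ck norm_of_real using r by simp
    moreover have "cmod (cinner x k) \<le> cmod (cinner x (k0 + k)) + cmod (cinner x k0)"
      by (metis cinner_add_right add_diff_cancel_left' norm_diff_ineq norm_triangle_ineq4 order_trans)
    ultimately have "r / 2 * norm x \<le> 2 * real n * norm h" using a1 a2 by simp
    thus ?thesis using r by (simp add: field_simps)
  qed
  thus ?thesis by blast
qed


lemma csubspace_closure:
  fixes S :: "'a::chilbert set"
  assumes S: "csubspace S"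
  shows "csubspace (closure S)"
  unfolding csubspace_def
proof (intro conjI ballI allI)
  show "0 \<in> closure S" using cs_zero[OF S] closure_subset by blast
next
  fix x y assume "x \<in> closure S" "y \<in> closure S"
  then obtain X Y where X: "\<forall>n. X n \<in> S" "X \<longlonglongrightarrow> x" and Y: "\<forall>n. Y n \<in> S" "Y \<longlonglongrightarrow> y"
    by (meson closure_sequential)
  have "\<forall>n. X n + Y n \<in> S" using X Y S by (simp add: cs_add)
  moreover have "(\<lambda>n. X n + Y n) \<longlonglongrightarrow> x + y" using X Y by (intro tendsto_intros)
  ultimately show "x + y \<in> closure S" by (meson closure_sequential)
next
  fix c x assume "x \<in> closure S"
  then obtain X where X: "\<forall>n. X n \<in> S" "X \<longlonglongrightarrow> x" by (meson closure_sequential)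
  have "\<forall>n. cscale c (X n) \<in> S" using X S by (simp add: cs_scale)
  moreover have "(\<lambda>n. cscale c (X n)) \<longlonglongrightarrow> cscale c x" using X by (intro tendsto_intros)
  ultimately show "cscale c x \<in> closure S" by (meson closure_sequential)
qed

lemma adj_unique:
  fixes T :: "('a::chilbert \<times> 'b::chilbert) set"
  assumes "closure (Domain T) = UNIV" "(h, k1) \<in> adj T" "(h, k2) \<in> adj T"
  shows "k1 = k2"
proof -
  have "k1 - k2 = 0"
  proof (rule dense_zero[OF assms(1)])
    fix f assume "f \<in> Domain T"
    then obtain g where fg: "(f, g) \<in> T" by blast
    show "cinner f (k1 - k2) = 0"
      using adjD[OF assms(2) fg] adjD[OF assms(3) fg] by (simp add: cinner_diff_right)
  qed
  thus ?thesis by simp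
qed

lemma adj_operator:
  fixes T :: "('a::chilbert \<times> 'b::chilbert) set"
  assumes "closure (Domain T) = UNIV"
  shows "is_operator (adj T)"
proof -
  have z: "(0, 0) \<in> adj T" by (auto simp: adj_def)
  have "mulr (adj T) = {0}"
    using adj_unique[OF assms _ z] z by (auto simp: mulr_def)
  thus ?thesis by (simp add: is_operator_def)
qed

lemma bclin_bounded_linear:
  assumes "bounded_clinear_map G"
  shows "bounded_linear G"
proof -
  have add: "\<And>x y. G (x + y) = G x + G y" and sc: "\<And>c x. G (cscale c x) = cscale c (G x)"
    and bd: "\<exists>K. \<forall>x. norm (G x) \<le> norm x * K"
    using assms by (auto simp: bounded_clinear_map_def)
  show ?thesis
  proof
    fix x y show "G (x + y) = G x + G y" by (rule add)
  next
    fix r x show "G (scaleR r x) = scaleR r (G x)" by (metis sc cscale_of_real)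
  next
    show "\<exists>K. \<forall>x. norm (G x) \<le> norm x * K" by (rule bd)
  qed
qed

definition clf :: "('a \<times> 'b) set \<Rightarrow> 'a::topological_space \<Rightarrow> 'b::topological_space" where
  "clf T h = (THE x. (h, x) \<in> closure T)"

lemma closure_bdd_op:
  fixes T :: "('a::chilbert \<times> 'b::chilbert) set"
  assumes T: "csubspace T" and bd: "\<And>h x. (h, x) \<in> T \<Longrightarrow> norm x \<le> C * norm h"
    and dense: "closure (Domain T) = UNIV"
  shows "closure T = graph (clf T)" "bounded_clinear_map (clf T)"
    "\<And>h. norm (clf T h) \<le> C * norm h"
proof -
  have BB: "closure T \<subseteq> {p. norm (snd p) \<le> C * norm (fst p)}"
    by (rule closure_minimal) (auto intro!: closed_Collect_le continuous_intros bd)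
  have CS: "csubspace (closure T)" by (rule csubspace_closure[OF T])
  have uniq: "x1 = x2" if "(h, x1) \<in> closure T" "(h, x2) \<in> closure T" for h x1 x2
  proof -
    have "(h, x1) - (h, x2) \<in> closure T" using cs_diff[OF CS that] .
    hence "(0, x1 - x2) \<in> closure T" by simp
    hence "norm (x1 - x2) \<le> C * norm (0::'a)" using BB by auto
    thus ?thesis by simp
  qed
  have ex: "\<exists>x. (h, x) \<in> closure T" for h
  proof -
    have "h \<in> closure (Domain T)" using dense by simp
    then obtain hs where hs: "\<forall>n. hs n \<in> Domain T" "hs \<longlonglongrightarrow> h" by (meson closure_sequential)
    hence "\<forall>n. \<exists>x. (hs n, x) \<in> T" by blast
    then obtain xs where xs: "\<And>n. (hs n, xs n) \<in> T" by metis
    have cd: "norm (xs m - xs n) \<le> C * norm (hs m - hs n)" for m n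
    proof -
      have "(hs m - hs n, xs m - xs n) \<in> T" using cs_diff[OF T xs[of m] xs[of n]] by simp
      thus ?thesis by (rule bd)
    qed
    have "Cauchy hs" using hs(2) by (rule LIMSEQ_imp_Cauchy)
    have "Cauchy xs"
    proof (rule metric_CauchyI)
      fix e :: real assume e: "0 < e"
      have "e / (\<bar>C\<bar> + 1) > 0" using e by simp
      then obtain M where M: "\<forall>m\<ge>M. \<forall>n\<ge>M. dist (hs m) (hs n) < e / (\<bar>C\<bar> + 1)"
        using \<open>Cauchy hs\<close> by (meson metric_CauchyD)
      show "\<exists>M. \<forall>m\<ge>M. \<forall>n\<ge>M. dist (xs m) (xs n) < e"
      proof (intro exI allI impI)
        fix m n assume mn: "M \<le> m" "M \<le> n"
        have "dist (xs m) (xs n) \<le> C * norm (hs m - hs n)" using cd by (simp add: dist_norm)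
        also have "\<dots> \<le> \<bar>C\<bar> * dist (hs m) (hs n)" by (simp add: dist_norm mult_right_mono)
        also have "\<dots> \<le> \<bar>C\<bar> * (e / (\<bar>C\<bar> + 1))" using M mn by (intro mult_left_mono) (auto intro: less_imp_le)
        also have "\<dots> < e" using e by (simp add: field_simps)
        finally show "dist (xs m) (xs n) < e" .
      qed
    qed
    then obtain x where "xs \<longlonglongrightarrow> x" using Cauchy_convergent_iff convergent_def by blast
    hence "(\<lambda>n. (hs n, xs n)) \<longlonglongrightarrow> (h, x)" using hs(2) by (intro tendsto_Pair)
    hence "(h, x) \<in> closure T" using xs by (meson closure_sequential)
    thus ?thesis by blast
  qed
  have mem: "(h, clf T h) \<in> closure T" for h
    unfolding clf_def by (rule theI') (use ex uniq in blast)
  have eq: "clf T h = x" if "(h, x) \<in> closure T" for h x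
    using uniq[OF mem that] .
  show "closure T = graph (clf T)"
    unfolding graph_def using mem eq by auto
  show nb: "norm (clf T h) \<le> C * norm h" for h using subsetD[OF BB mem[of h]] by simp
  show "bounded_clinear_map (clf T)"
    unfolding bounded_clinear_map_def
  proof (intro conjI allI)
    fix x y
    have "(x, clf T x) + (y, clf T y) \<in> closure T" by (intro cs_add CS mem)
    thus "clf T (x + y) = clf T x + clf T y" by (intro eq) simp
  next
    fix c x
    have "cscale c (x, clf T x) \<in> closure T" by (intro cs_scale CS mem)
    thus "clf T (cscale c x) = cscale c (clf T x)" by (intro eq) (simp add: cscale_prod_def)
  next
    show "\<exists>K. \<forall>x. norm (clf T x) \<le> norm x * K" using nb by (metis mult.commute)
  qed
qed


lemma cauchy_dom:
  fixes X :: "nat \<Rightarrow> 'a::metric_space" and Y :: "nat \<Rightarrow> 'b::metric_space"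
  assumes "Cauchy X" "\<And>m n. dist (Y m) (Y n) \<le> c * dist (X m) (X n)"
  shows "Cauchy Y"
proof (rule metric_CauchyI)
  fix e :: real assume e: "0 < e"
  have "e / (\<bar>c\<bar> + 1) > 0" using e by simp
  then obtain M where M: "\<forall>m\<ge>M. \<forall>n\<ge>M. dist (X m) (X n) < e / (\<bar>c\<bar> + 1)"
    using assms(1) by (meson metric_CauchyD)
  show "\<exists>M. \<forall>m\<ge>M. \<forall>n\<ge>M. dist (Y m) (Y n) < e"
  proof (intro exI allI impI)
    fix m n assume mn: "M \<le> m" "M \<le> n"
    have "dist (Y m) (Y n) \<le> c * dist (X m) (X n)" by (rule assms(2))
    also have "\<dots> \<le> \<bar>c\<bar> * dist (X m) (X n)" by (simp add: mult_right_mono)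
    also have "\<dots> \<le> \<bar>c\<bar> * (e / (\<bar>c\<bar> + 1))" using M mn by (intro mult_left_mono) (auto intro: less_imp_le)
    also have "\<dots> < e" using e by (simp add: field_simps)
    finally show "dist (Y m) (Y n) < e" .
  qed
qed

locale ABP =
  fixes A :: "('a::chilbert \<times> 'a) set"
    and G :: "(('a \<times> 'a) \<times> ('b::chilbert \<times> 'b)) set"
  assumes csym: "closed_symmetric A" and abp: "AB_boundary_pair A G"
begin

abbreviation "A0 \<equiv> bpA0 G"
abbreviation "Dr \<equiv> Range (bp0 G)"

lemma GS: "csubspace G" using abp by (simp add: AB_boundary_pair_def)
lemma Dsub: "Domain G \<subseteq> adj A" using abp by (simp add: AB_boundary_pair_def)
lemma Ddense: "adj A \<subseteq> closure (Domain G)" using abp by (simp add: AB_boundary_pair_def)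
lemma green: "((f, f'), (h, h')) \<in> G \<Longrightarrow> ((g, g'), (k, k')) \<in> G \<Longrightarrow>
    cinner f' g - cinner f g' = cinner h' k - cinner h k'"
  using abp unfolding AB_boundary_pair_def by blast
lemma rdense: "closure Dr = UNIV" using abp by (simp add: AB_boundary_pair_def)
lemma sa: "adj A0 = A0" using abp by (simp add: AB_boundary_pair_def)
lemma A_cs: "csubspace A" and A_closed: "closed A" and A_sym: "A \<subseteq> adj A"
  using csym by (auto simp: closed_symmetric_def)

lemma G_add: "((f, f'), (h, h')) \<in> G \<Longrightarrow> ((g, g'), (k, k')) \<in> G \<Longrightarrow>
    ((f + g, f' + g'), (h + k, h' + k')) \<in> G"
  using cs_add[OF GS, of "((f, f'), (h, h'))" "((g, g'), (k, k'))"] by simp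

lemma G_diff: "((f, f'), (h, h')) \<in> G \<Longrightarrow> ((g, g'), (k, k')) \<in> G \<Longrightarrow>
    ((f - g, f' - g'), (h - k, h' - k')) \<in> G"
  using cs_diff[OF GS, of "((f, f'), (h, h'))" "((g, g'), (k, k'))"] by simp

lemma G_scale: "((f, f'), (h, h')) \<in> G \<Longrightarrow>
    ((cscale c f, cscale c f'), (cscale c h, cscale c h')) \<in> G"
  using cs_scale[OF GS, of "((f, f'), (h, h'))" c] by (simp add: cscale_prod_def)

lemma G_zero: "((0, 0), (0, 0)) \<in> G"
  using cs_zero[OF GS] by (simp add: zero_prod_def)

lemma A0_iff: "(f, f') \<in> A0 \<longleftrightarrow> (\<exists>y. ((f, f'), (0, y)) \<in> G)"
  by (auto simp: bpA0_def kerr_def bp0_def)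

lemma Dr_iff: "h \<in> Dr \<longleftrightarrow> (\<exists>f f' h'. ((f, f'), (h, h')) \<in> G)"
  by (auto simp: bp0_def) (metis (mono_tags, lifting) Range.intros mem_Collect_eq)

lemma A0_D: "A0 \<subseteq> Domain G" by (auto simp: A0_iff)
lemma A0_adjA: "A0 \<subseteq> adj A" using A0_D Dsub by blast
lemma A_A0: "A \<subseteq> A0"
proof -
  have "A \<subseteq> adj A0" unfolding sub_adj_iff[of A A0] by (rule A0_adjA)
  thus ?thesis using sa by simp
qed

lemma A0_sym: "(f, f') \<in> A0 \<Longrightarrow> cinner f' f = cinner f f'"
  using adjD[of f f' A0 f f'] sa by simp

lemma A0_cs: "csubspace A0" using csubspace_adj[of A0] sa by simp
lemma A0_closed: "closed A0" using closed_adj[of A0] sa by simp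

lemma A0_add: "(f, f') \<in> A0 \<Longrightarrow> (g, g') \<in> A0 \<Longrightarrow> (f + g, f' + g') \<in> A0"
  using cs_add[OF A0_cs, of "(f, f')" "(g, g')"] by simp
lemma A0_diff: "(f, f') \<in> A0 \<Longrightarrow> (g, g') \<in> A0 \<Longrightarrow> (f - g, f' - g') \<in> A0"
  using cs_diff[OF A0_cs, of "(f, f')" "(g, g')"] by simp
lemma A0_scale: "(f, f') \<in> A0 \<Longrightarrow> (cscale c f, cscale c f') \<in> A0"
  using cs_scale[OF A0_cs, of "(f, f')" c] by (simp add: cscale_prod_def)

lemma A0_lower:
  assumes "(f, f') \<in> A0"
  shows "\<bar>Im \<zeta>\<bar> * norm f \<le> norm (f' - cscale \<zeta> f)"
proof (cases "f = 0")
  case True thus ?thesis by simp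
next
  case False
  define z where "z = cinner (f' - cscale \<zeta> f) f"
  have z: "z = cinner f' f - \<zeta> * of_real ((norm f)^2)"
    by (simp add: z_def cinner_diff_left cinner_cscale_left cinner_norm)
  have "cinner f' f = cnj (cinner f' f)" using A0_sym[OF assms] cinner_commute[of f f'] by metis
  hence r: "Im (cinner f' f) = 0" by (metis cnj.simps(2) equal_neg_zero)
  have "Im z = - Im \<zeta> * (norm f)^2" using r by (simp add: z)
  hence "\<bar>Im \<zeta>\<bar> * (norm f)^2 = \<bar>Im z\<bar>" by (simp add: abs_mult)
  also have "\<dots> \<le> cmod z" by (rule abs_Im_le_cmod)
  also have "\<dots> \<le> norm (f' - cscale \<zeta> f) * norm f" unfolding z_def by (rule cauchy_schwarz)
  finally have "\<bar>Im \<zeta>\<bar> * norm f * norm f \<le> norm (f' - cscale \<zeta> f) * norm f"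
    by (simp add: power2_eq_square mult.assoc)
  thus ?thesis using False by simp
qed

lemma ran_full:
  assumes "Im \<zeta> \<noteq> 0"
  shows "\<exists>f f'. (f, f') \<in> A0 \<and> f' - cscale \<zeta> f = k"
proof -
  define R where "R = {f' - cscale \<zeta> f | f f'. (f, f') \<in> A0}"
  have Rcs: "csubspace R" unfolding csubspace_def
  proof (intro conjI ballI allI)
    show "0 \<in> R" unfolding R_def using cs_zero[OF A0_cs] by (auto simp: zero_prod_def intro!: exI[of _ 0])
  next
    fix x y assume "x \<in> R" "y \<in> R"
    then obtain f f' g g' where "(f, f') \<in> A0" "x = f' - cscale \<zeta> f" "(g, g') \<in> A0" "y = g' - cscale \<zeta> g"
      by (auto simp: R_def)
    thus "x + y \<in> R" unfolding R_def
      by (intro CollectI exI[of _ "f + g"] exI[of _ "f' + g'"]) (auto simp: A0_add cscale_add_right)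
  next
    fix c x assume "x \<in> R"
    then obtain f f' where "(f, f') \<in> A0" "x = f' - cscale \<zeta> f" by (auto simp: R_def)
    thus "cscale c x \<in> R" unfolding R_def
      by (intro CollectI exI[of _ "cscale c f"] exI[of _ "cscale c f'"])
         (auto simp: A0_scale cscale_diff_right cscale_cscale mult.commute)
  qed
  have Rcl: "closed R" unfolding closed_sequential_limits
  proof (intro allI impI, elim conjE)
    fix X l assume XR: "\<forall>n. X n \<in> R" and lim: "X \<longlonglongrightarrow> l"
    hence "\<forall>n. \<exists>f f'. (f, f') \<in> A0 \<and> X n = f' - cscale \<zeta> f" unfolding R_def by blast
    then obtain fs fs' where fs: "\<And>n. (fs n, fs' n) \<in> A0" and X: "\<And>n. X n = fs' n - cscale \<zeta> (fs n)"
      by metis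
    have "Cauchy fs"
    proof (rule cauchy_dom[OF LIMSEQ_imp_Cauchy[OF lim], where c="1 / \<bar>Im \<zeta>\<bar>"])
      fix m n
      have "\<bar>Im \<zeta>\<bar> * norm (fs m - fs n) \<le> norm ((fs' m - fs' n) - cscale \<zeta> (fs m - fs n))"
        by (rule A0_lower[OF A0_diff[OF fs fs]])
      also have "\<dots> = dist (X m) (X n)" by (simp add: X dist_norm cscale_diff_right algebra_simps)
      finally show "dist (fs m) (fs n) \<le> 1 / \<bar>Im \<zeta>\<bar> * dist (X m) (X n)"
        using assms by (simp add: dist_norm field_simps)
    qed
    then obtain f where f: "fs \<longlonglongrightarrow> f" using Cauchy_convergent_iff convergent_def by blast
    have "(\<lambda>n. X n + cscale \<zeta> (fs n)) \<longlonglongrightarrow> l + cscale \<zeta> f" using lim f by (intro tendsto_intros)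
    hence "fs' \<longlonglongrightarrow> l + cscale \<zeta> f" by (simp add: X)
    hence "(\<lambda>n. (fs n, fs' n)) \<longlonglongrightarrow> (f, l + cscale \<zeta> f)" using f by (intro tendsto_Pair)
    hence "(f, l + cscale \<zeta> f) \<in> A0" using closed_sequentially[OF A0_closed, of "\<lambda>n. (fs n, fs' n)"] fs by simp
    thus "l \<in> R" unfolding R_def by force
  qed
  have "R = UNIV"
  proof (rule closed_subspace_perp_trivial[OF Rcs Rcl])
    fix y assume o: "\<forall>s\<in>R. cinner s y = 0"
    have "(y, cscale (cnj \<zeta>) y) \<in> adj A0"
    proof (rule adjI)
      fix f f' assume ff: "(f, f') \<in> A0"
      hence "f' - cscale \<zeta> f \<in> R" by (auto simp: R_def)
      hence "cinner (f' - cscale \<zeta> f) y = 0" using o by blast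
      thus "cinner f' y = cinner f (cscale (cnj \<zeta>) y)"
        by (simp add: cinner_diff_left cinner_cscale_left cinner_cscale_right)
    qed
    hence "(y, cscale (cnj \<zeta>) y) \<in> A0" using sa by simp
    from A0_lower[OF this, of "cnj \<zeta>"] have "\<bar>Im \<zeta>\<bar> * norm y \<le> 0" by simp
    thus "y = 0" using assms by (simp add: mult_le_0_iff)
  qed
  hence "k \<in> R" by simp
  thus ?thesis by (auto simp: R_def)
qed

definition res :: "complex \<Rightarrow> 'a \<Rightarrow> 'a" where
  "res \<zeta> k = (SOME f. \<exists>f'. (f, f') \<in> A0 \<and> f' - cscale \<zeta> f = k)"

lemma res_mem: "Im \<zeta> \<noteq> 0 \<Longrightarrow> (res \<zeta> k, k + cscale \<zeta> (res \<zeta> k)) \<in> A0"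
proof -
  assume z: "Im \<zeta> \<noteq> 0"
  have "\<exists>f f'. (f, f') \<in> A0 \<and> f' - cscale \<zeta> f = k" by (rule ran_full[OF z])
  hence "\<exists>f'. (res \<zeta> k, f') \<in> A0 \<and> f' - cscale \<zeta> (res \<zeta> k) = k"
    unfolding res_def by (rule someI_ex)
  then obtain f' where "(res \<zeta> k, f') \<in> A0" "f' - cscale \<zeta> (res \<zeta> k) = k" by blast
  thus ?thesis by (metis diff_add_cancel)
qed

lemma res_unique:
  assumes "Im \<zeta> \<noteq> 0" "(f, f') \<in> A0" "f' - cscale \<zeta> f = k"
  shows "f = res \<zeta> k"
proof -
  have "(f - res \<zeta> k, f' - (k + cscale \<zeta> (res \<zeta> k))) \<in> A0"
    by (rule A0_diff[OF assms(2) res_mem[OF assms(1)]])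
  from A0_lower[OF this, of \<zeta>] have "\<bar>Im \<zeta>\<bar> * norm (f - res \<zeta> k) \<le> 0"
    using assms(3) by (simp add: cscale_diff_right algebra_simps)
  thus ?thesis using assms(1) by (simp add: mult_le_0_iff)
qed

lemma res_add: "Im \<zeta> \<noteq> 0 \<Longrightarrow> res \<zeta> (x + y) = res \<zeta> x + res \<zeta> y"
  by (rule res_unique[symmetric, OF _ A0_add[OF res_mem res_mem]])
     (auto simp: cscale_add_right algebra_simps)

lemma res_scale: "Im \<zeta> \<noteq> 0 \<Longrightarrow> res \<zeta> (cscale c x) = cscale c (res \<zeta> x)"
  by (rule res_unique[symmetric, OF _ A0_scale[OF res_mem]])
     (auto simp: cscale_add_right cscale_cscale mult.commute)

lemma res_bound: "Im \<zeta> \<noteq> 0 \<Longrightarrow> \<bar>Im \<zeta>\<bar> * norm (res \<zeta> k) \<le> norm k"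
  using A0_lower[OF res_mem, of \<zeta> \<zeta> k] by simp

lemma res_bl: "Im \<zeta> \<noteq> 0 \<Longrightarrow> bounded_linear (res \<zeta>)"
proof -
  assume z: "Im \<zeta> \<noteq> 0"
  show ?thesis
  proof
    fix x y show "res \<zeta> (x + y) = res \<zeta> x + res \<zeta> y" by (rule res_add[OF z])
  next
    fix r x show "res \<zeta> (scaleR r x) = scaleR r (res \<zeta> x)"
      by (metis res_scale[OF z] cscale_of_real)
  next
    show "\<exists>K. \<forall>x. norm (res \<zeta> x) \<le> norm x * K"
      using res_bound[OF z] z by (intro exI[of _ "1 / \<bar>Im \<zeta>\<bar>"]) (simp add: field_simps mult.commute)
  qed
qed

end

context ABP begin

lemma kerG: "kerr G = A"
proof
  show "kerr G \<subseteq> A"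
  proof
    fix p assume "p \<in> kerr G"
    then obtain f f' where p: "p = (f, f')" and pG: "((f, f'), (0, 0)) \<in> G"
      by (cases p) (auto simp: kerr_def zero_prod_def)
    have "(f, f') \<in> adj (Domain G)"
    proof (rule adjI)
      fix g g' assume "(g, g') \<in> Domain G"
      then obtain k k' where "((g, g'), (k, k')) \<in> G" by auto
      from green[OF pG this] have "cinner f' g = cinner f g'" by simp
      thus "cinner g' f = cinner g f'" by (metis cinner_commute)
    qed
    also have "adj (Domain G) = adj (closure (Domain G))" by (simp add: adj_closure)
    also have "\<dots> \<subseteq> adj (adj A)" by (rule adj_antimono[OF Ddense])
    also have "\<dots> \<subseteq> A" by (rule adj_adj_closed[OF A_cs A_closed])
    finally show "p \<in> A" using p by simp
  qed
next
  show "A \<subseteq> kerr G"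
  proof
    fix p assume pA: "p \<in> A"
    obtain f f' where p: "p = (f, f')" by fastforce
    have "(f, f') \<in> A0" using pA p A_A0 by blast
    then obtain y where y: "((f, f'), (0, y)) \<in> G" by (auto simp: A0_iff)
    have "y = 0"
    proof (rule dense_zero[OF rdense])
      fix k assume "k \<in> Dr"
      then obtain g g' k' where gk: "((g, g'), (k, k')) \<in> G" by (auto simp: Dr_iff)
      have "(g, g') \<in> adj A" using gk Dsub by blast
      hence "cinner f' g = cinner f g'" using adjD pA p by blast
      with green[OF y gk] have "cinner y k = 0" by simp
      thus "cinner k y = 0" by (metis cinner_commute complex_cnj_zero)
    qed
    thus "p \<in> kerr G" using y p by (simp add: kerr_def zero_prod_def)
  qed
qed

lemma decomp_G:
  assumes z: "Im \<zeta> \<noteq> 0" and fG: "((f, f'), (h, h')) \<in> G"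
  shows "\<exists>u u' y. (u, u') \<in> A0 \<and> ((u, u'), (0, y)) \<in> G \<and>
     ((f - u, cscale \<zeta> (f - u)), (h, h' - y)) \<in> G \<and> f' = u' + cscale \<zeta> (f - u)"
proof -
  define w where "w = f' - cscale \<zeta> f"
  define u where "u = res \<zeta> w"
  define u' where "u' = w + cscale \<zeta> u"
  have uA: "(u, u') \<in> A0" unfolding u_def u'_def by (rule res_mem[OF z])
  then obtain y where y: "((u, u'), (0, y)) \<in> G" by (auto simp: A0_iff)
  have e: "f' - u' = cscale \<zeta> (f - u)" by (simp add: u'_def w_def cscale_diff_right)
  have "((f - u, f' - u'), (h - 0, h' - y)) \<in> G" by (rule G_diff[OF fG y])
  hence "((f - u, cscale \<zeta> (f - u)), (h, h' - y)) \<in> G" by (simp add: e)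
  moreover have "f' = u' + cscale \<zeta> (f - u)" using e by (simp add: algebra_simps)
  ultimately show ?thesis using uA y by blast
qed

lemma decomp_D:
  assumes z: "Im \<zeta> \<noteq> 0"
  shows "Domain G = rsum A0 (Nhat \<zeta> (Domain G))"
proof
  show "Domain G \<subseteq> rsum A0 (Nhat \<zeta> (Domain G))"
  proof
    fix p assume "p \<in> Domain G"
    then obtain f f' h h' where p: "p = (f, f')" and fG: "((f, f'), (h, h')) \<in> G" by (metis DomainE surj_pair)
    obtain u u' y where uA: "(u, u') \<in> A0" and
      r: "((f - u, cscale \<zeta> (f - u)), (h, h' - y)) \<in> G" and e: "f' = u' + cscale \<zeta> (f - u)"
      using decomp_G[OF z fG] by blast
    have "(f - u, cscale \<zeta> (f - u)) \<in> Nhat \<zeta> (Domain G)"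
      using r by (force simp: Nhat_def Nker_def)
    thus "p \<in> rsum A0 (Nhat \<zeta> (Domain G))" unfolding rsum_def p
      using uA e by (intro CollectI exI[of _ u] exI[of _ u'] exI[of _ "f - u"] exI[of _ "cscale \<zeta> (f - u)"]) auto
  qed
next
  show "rsum A0 (Nhat \<zeta> (Domain G)) \<subseteq> Domain G"
  proof
    fix p assume "p \<in> rsum A0 (Nhat \<zeta> (Domain G))"
    then obtain u u' x where p: "p = (u + x, u' + cscale \<zeta> x)" and uA: "(u, u') \<in> A0"
      and xD: "(x, cscale \<zeta> x) \<in> Domain G"
      by (auto simp: rsum_def Nhat_def Nker_def)
    obtain y where y: "((u, u'), (0, y)) \<in> G" using uA by (auto simp: A0_iff)
    obtain h h' where x: "((x, cscale \<zeta> x), (h, h')) \<in> G" using xD by force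
    show "p \<in> Domain G" using G_add[OF y x] p by force
  qed
qed

lemma Nhat_dense:
  assumes z: "Im \<zeta> \<noteq> 0"
  shows "Nhat \<zeta> (adj A) \<subseteq> closure (Nhat \<zeta> (Domain G))"
proof
  fix p assume "p \<in> Nhat \<zeta> (adj A)"
  then obtain x where p: "p = (x, cscale \<zeta> x)" and xA: "(x, cscale \<zeta> x) \<in> adj A"
    by (auto simp: Nhat_def Nker_def)
  have xcl: "(x, cscale \<zeta> x) \<in> closure (Domain G)" using xA Ddense by blast
  define K where "K = (1 + cmod \<zeta>) * (2 + (1 + cmod \<zeta>) / \<bar>Im \<zeta>\<bar>)"
  have K0: "0 \<le> K" by (simp add: K_def)
  show "p \<in> closure (Nhat \<zeta> (Domain G))"
    unfolding closure_approachable
  proof (intro allI impI)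
    fix e :: real assume e: "0 < e"
    have "e / (1 + K) > 0" using e K0 by simp
    then obtain q where qD: "q \<in> Domain G" and dq: "dist q (x, cscale \<zeta> x) < e / (1 + K)"
      using xcl unfolding closure_approachable by blast
    obtain g g' where q: "q = (g, g')" by fastforce
    define d where "d = dist q (x, cscale \<zeta> x)"
    have d1: "norm (g - x) \<le> d" unfolding d_def q dist_norm
      using norm_fst_le[of "g - x" "g' - cscale \<zeta> x"] by simp
    have d2: "norm (g' - cscale \<zeta> x) \<le> d" unfolding d_def q dist_norm
      using norm_snd_le[of "g' - cscale \<zeta> x" "g - x"] by simp
    define w where "w = g' - cscale \<zeta> g"
    define u where "u = res \<zeta> w"
    define u' where "u' = w + cscale \<zeta> u"
    have uA: "(u, u') \<in> A0" unfolding u_def u'_def by (rule res_mem[OF z])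
    have "w = (g' - cscale \<zeta> x) - cscale \<zeta> (g - x)" by (simp add: w_def cscale_diff_right)
    hence "norm w \<le> norm (g' - cscale \<zeta> x) + cmod \<zeta> * norm (g - x)"
      by (metis norm_cscale norm_triangle_ineq4)
    also have "\<dots> \<le> d + cmod \<zeta> * d" using d1 d2 by (simp add: add_mono mult_left_mono)
    finally have nw: "norm w \<le> (1 + cmod \<zeta>) * d" by (simp add: algebra_simps)
    have nu: "norm u \<le> norm w / \<bar>Im \<zeta>\<bar>" using res_bound[OF z, of w] z
      by (simp add: u_def field_simps mult.commute)
    have "norm u' \<le> norm w + cmod \<zeta> * norm u" unfolding u'_def
      by (metis norm_cscale norm_triangle_ineq)
    have nuu: "norm (u, u') \<le> K * d"
    proof -
      have "norm (u, u') \<le> norm u + norm u'" by (rule norm_Pair_le)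
      also have "\<dots> \<le> norm u + (norm w + cmod \<zeta> * norm u)" using \<open>norm u' \<le> _\<close> by simp
      also have "\<dots> = norm w + (1 + cmod \<zeta>) * norm u" by (simp add: algebra_simps)
      also have "\<dots> \<le> norm w + (1 + cmod \<zeta>) * (norm w / \<bar>Im \<zeta>\<bar>)"
        using nu by (intro add_left_mono mult_left_mono) auto
      also have "\<dots> = norm w * (1 + (1 + cmod \<zeta>) / \<bar>Im \<zeta>\<bar>)" by (simp add: algebra_simps)
      also have "\<dots> \<le> ((1 + cmod \<zeta>) * d) * (1 + (1 + cmod \<zeta>) / \<bar>Im \<zeta>\<bar>)"
        using nw by (intro mult_right_mono) auto
      also have "\<dots> \<le> K * d" unfolding K_def using d1
        by (simp add: algebra_simps mult_left_mono) (smt (verit, ccfv_SIG) mult_nonneg_nonneg norm_ge_zero)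
      finally show ?thesis .
    qed
    define v where "v = g - u"
    have vv: "(v, cscale \<zeta> v) = q - (u, u')"
      by (simp add: q v_def u'_def w_def cscale_diff_right)
    have "(v, cscale \<zeta> v) \<in> Domain G"
    proof -
      obtain k k' where "((g, g'), (k, k')) \<in> G" using qD q by force
      moreover obtain y where "((u, u'), (0, y)) \<in> G" using uA by (auto simp: A0_iff)
      ultimately have "((g - u, g' - u'), (k - 0, k' - y)) \<in> G" by (rule G_diff)
      thus ?thesis using vv q by force
    qed
    hence vN: "(v, cscale \<zeta> v) \<in> Nhat \<zeta> (Domain G)" by (auto simp: Nhat_def Nker_def)
    have "dist (v, cscale \<zeta> v) p \<le> dist q p + norm (u, u')"
    proof -
      have "norm (q - (u, u') - p) = norm ((q - p) - (u, u'))" by (simp add: algebra_simps)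
      also have "\<dots> \<le> norm (q - p) + norm (u, u')" by (rule norm_triangle_ineq4)
      finally show ?thesis unfolding vv dist_norm .
    qed
    also have "\<dots> \<le> d + K * d" using nuu by (simp add: d_def p)
    also have "\<dots> = (1 + K) * d" by (simp add: algebra_simps)
    also have "\<dots> < (1 + K) * (e / (1 + K))" using dq K0 by (intro mult_strict_left_mono) (auto simp: d_def)
    also have "\<dots> = e" using K0 by simp
    finally show "\<exists>y\<in>Nhat \<zeta> (Domain G). dist y p < e" using vN by blast
  qed
qed

abbreviation "gam \<zeta> \<equiv> gammaf G \<zeta>"

lemma gam_iff: "(h, x) \<in> gam \<zeta> \<longleftrightarrow> (\<exists>h'. ((x, cscale \<zeta> x), (h, h')) \<in> G)"
  by (auto simp: gammaf_def)

lemma gam_cs: "csubspace (gam \<zeta>)"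
  unfolding csubspace_def
proof (intro conjI ballI allI)
  show "0 \<in> gam \<zeta>" using G_zero by (auto simp: gam_iff zero_prod_def)
next
  fix p q assume "p \<in> gam \<zeta>" "q \<in> gam \<zeta>"
  then obtain h x h' k y k' where p: "p = (h, x)" "((x, cscale \<zeta> x), (h, h')) \<in> G"
    and q: "q = (k, y)" "((y, cscale \<zeta> y), (k, k')) \<in> G" by (metis gam_iff surj_pair)
  from G_add[OF p(2) q(2)] show "p + q \<in> gam \<zeta>" using p q by (auto simp: gam_iff cscale_add_right)
next
  fix c p assume "p \<in> gam \<zeta>"
  then obtain h x h' where p: "p = (h, x)" "((x, cscale \<zeta> x), (h, h')) \<in> G" by (metis gam_iff surj_pair)
  from G_scale[OF p(2), of c] show "cscale c p \<in> gam \<zeta>" using p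
    by (auto simp: gam_iff cscale_prod_def cscale_cscale mult.commute)
qed

lemma gam_op: "Im \<zeta> \<noteq> 0 \<Longrightarrow> is_operator (gam \<zeta>)"
proof -
  assume z: "Im \<zeta> \<noteq> 0"
  have "x = 0" if h0: "(0, x) \<in> gam \<zeta>" for x
  proof -
    obtain h' where "((x, cscale \<zeta> x), (0, h')) \<in> G" using gam_iff[THEN iffD1, OF h0] by blast
    hence "(x, cscale \<zeta> x) \<in> A0" by (auto simp: A0_iff)
    from A0_lower[OF this, of \<zeta>] have "\<bar>Im \<zeta>\<bar> * norm x \<le> 0" by simp
    thus ?thesis using z by (simp add: mult_le_0_iff)
  qed
  moreover have "(0, 0) \<in> gam \<zeta>" using cs_zero[OF gam_cs] by (simp add: zero_prod_def)
  ultimately show ?thesis by (auto simp: is_operator_def mulr_def)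
qed

lemma gam_dom: "Im \<zeta> \<noteq> 0 \<Longrightarrow> Domain (gam \<zeta>) = Dr"
proof
  assume z: "Im \<zeta> \<noteq> 0"
  show "Domain (gam \<zeta>) \<subseteq> Dr" by (auto simp: gam_iff Dr_iff) blast
  show "Dr \<subseteq> Domain (gam \<zeta>)"
  proof
    fix h assume "h \<in> Dr"
    then obtain f f' h' where fG: "((f, f'), (h, h')) \<in> G" by (auto simp: Dr_iff)
    obtain u u' y where "((f - u, cscale \<zeta> (f - u)), (h, h' - y)) \<in> G"
      using decomp_G[OF z fG] by blast
    hence "(h, f - u) \<in> gam \<zeta>" by (auto simp: gam_iff)
    thus "h \<in> Domain (gam \<zeta>)" by blast
  qed
qed

lemma gam_ran: "Range (gam \<zeta>) = Nker \<zeta> (Domain G)"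
proof
  show "Range (gam \<zeta>) \<subseteq> Nker \<zeta> (Domain G)" by (auto simp: gam_iff Nker_def)
  show "Nker \<zeta> (Domain G) \<subseteq> Range (gam \<zeta>)"
  proof
    fix x assume "x \<in> Nker \<zeta> (Domain G)"
    then obtain h h' where "((x, cscale \<zeta> x), (h, h')) \<in> G" by (auto simp: Nker_def)
    hence "(h, x) \<in> gam \<zeta>" by (auto simp: gam_iff)
    thus "x \<in> Range (gam \<zeta>)" by blast
  qed
qed

lemma gam_ker: "kerr (gam \<zeta>) = mulr (bp0 G)"
  by (auto simp: gam_iff kerr_def mulr_def bp0_def zero_prod_def)

lemma A0_adj_gam:
  assumes "((f, g), (0, y)) \<in> G"
  shows "(g - cscale (cnj \<zeta>) f, y) \<in> adj (gam \<zeta>)"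
proof (rule adjI)
  fix h x assume "(h, x) \<in> gam \<zeta>"
  then obtain h' where hx: "((x, cscale \<zeta> x), (h, h')) \<in> G" by (auto simp: gam_iff)
  from green[OF assms hx] have "cinner g x - cinner f (cscale \<zeta> x) = cinner y h" by simp
  hence "cinner (g - cscale (cnj \<zeta>) f) x = cinner y h"
    by (simp add: cinner_diff_left cinner_cscale_left cinner_cscale_right)
  thus "cinner x (g - cscale (cnj \<zeta>) f) = cinner h y" by (metis cinner_commute)
qed

lemma adj_gam_dom: "Im \<zeta> \<noteq> 0 \<Longrightarrow> Domain (adj (gam \<zeta>)) = UNIV"
proof -
  assume z: "Im \<zeta> \<noteq> 0"
  have "k \<in> Domain (adj (gam \<zeta>))" for k
  proof -
    have "Im (cnj \<zeta>) \<noteq> 0" using z by simp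
    then obtain f g where fg: "(f, g) \<in> A0" "g - cscale (cnj \<zeta>) f = k" using ran_full by blast
    then obtain y where "((f, g), (0, y)) \<in> G" by (auto simp: A0_iff)
    from A0_adj_gam[OF this, of \<zeta>] fg show ?thesis by blast
  qed
  thus ?thesis by blast
qed

lemma gam_bounded: "Im \<zeta> \<noteq> 0 \<Longrightarrow> \<exists>C\<ge>0. \<forall>h x. (h, x) \<in> gam \<zeta> \<longrightarrow> norm x \<le> C * norm h"
proof -
  assume z: "Im \<zeta> \<noteq> 0"
  have "\<exists>C. \<forall>h x. (h, x) \<in> gam \<zeta> \<longrightarrow> norm x \<le> C * norm h"
  proof (rule unif_bound)
    fix k
    obtain y where y: "(k, y) \<in> adj (gam \<zeta>)" using adj_gam_dom[OF z] by blast
    show "\<exists>c. \<forall>h x. (h, x) \<in> gam \<zeta> \<longrightarrow> cmod (cinner x k) \<le> c * norm h"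
    proof (intro exI[of _ "norm y"] allI impI)
      fix h x assume "(h, x) \<in> gam \<zeta>"
      hence "cinner x k = cinner h y" using adjD[OF y] by blast
      thus "cmod (cinner x k) \<le> norm y * norm h" using cauchy_schwarz[of h y] by (simp add: mult.commute)
    qed
  qed
  then obtain C where C: "\<forall>h x. (h, x) \<in> gam \<zeta> \<longrightarrow> norm x \<le> C * norm h" by blast
  show ?thesis
  proof (intro exI[of _ "max C 0"] conjI allI impI)
    fix h x assume "(h, x) \<in> gam \<zeta>"
    hence "norm x \<le> C * norm h" using C by blast
    also have "\<dots> \<le> max C 0 * norm h" by (simp add: mult_right_mono)
    finally show "norm x \<le> max C 0 * norm h" .
  qed simp
qed

end

context ABP begin

lemma gam_dense: "Im \<zeta> \<noteq> 0 \<Longrightarrow> closure (Domain (gam \<zeta>)) = UNIV"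
  using gam_dom rdense by simp

lemma adj_gam_op: "Im \<zeta> \<noteq> 0 \<Longrightarrow> is_operator (adj (gam \<zeta>))"
  by (rule adj_operator[OF gam_dense])

lemma adj_gam_unique: "Im \<zeta> \<noteq> 0 \<Longrightarrow> (k, y1) \<in> adj (gam \<zeta>) \<Longrightarrow> (k, y2) \<in> adj (gam \<zeta>) \<Longrightarrow> y1 = y2"
  by (rule adj_unique[OF gam_dense])

lemma adj_gam_bounded: "Im \<zeta> \<noteq> 0 \<Longrightarrow> bounded_rel (adj (gam \<zeta>))"
proof -
  assume z: "Im \<zeta> \<noteq> 0"
  obtain C where C0: "C \<ge> 0" and C: "\<And>h x. (h, x) \<in> gam \<zeta> \<Longrightarrow> norm x \<le> C * norm h"
    using gam_bounded[OF z] by blast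
  have "norm y \<le> C * norm k" if ky: "(k, y) \<in> adj (gam \<zeta>)" for k y
  proof (rule norm_le_from_cinner_dense[OF rdense])
    fix h assume "h \<in> Dr"
    then obtain x where hx: "(h, x) \<in> gam \<zeta>" using gam_dom[OF z] by blast
    have "cinner x k = cinner h y" using adjD[OF ky hx] .
    hence "cmod (cinner y h) = cmod (cinner x k)" by (metis cinner_commute complex_mod_cnj)
    also have "\<dots> \<le> norm x * norm k" by (rule cauchy_schwarz)
    also have "\<dots> \<le> C * norm h * norm k" using C[OF hx] by (simp add: mult_right_mono)
    finally show "cmod (cinner y h) \<le> C * norm k * norm h" by (simp add: algebra_simps)
  next
    show "0 \<le> C * norm k" using C0 by simp
  qed
  thus ?thesis unfolding bounded_rel_def by blast
qed

lemma Hrel_iff: "(k, p) \<in> Hrel A0 \<zeta> \<longleftrightarrow> (\<exists>f g. (f, g) \<in> A0 \<and> k = g - cscale \<zeta> f \<and> p = (f, g))"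
  by (auto simp: Hrel_def resolv_def)

lemma Hrel_G:
  assumes z: "Im \<zeta> \<noteq> 0"
  shows "Hrel A0 \<zeta> O G =
    rsum {(k, (0, k')) | k k'. (k, k') \<in> adj (gam (cnj \<zeta>))} ({0} \<times> mulr G)"
proof
  show "Hrel A0 \<zeta> O G \<subseteq> rsum {(k, (0, k')) | k k'. (k, k') \<in> adj (gam (cnj \<zeta>))} ({0} \<times> mulr G)"
  proof
    fix q assume "q \<in> Hrel A0 \<zeta> O G"
    then obtain k f g h h' where q: "q = (k, (h, h'))" and fg: "(f, g) \<in> A0" and k: "k = g - cscale \<zeta> f"
      and G1: "((f, g), (h, h')) \<in> G"
      by (auto simp: Hrel_iff)
    obtain y where y: "((f, g), (0, y)) \<in> G" using fg by (auto simp: A0_iff)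
    have ky: "(k, y) \<in> adj (gam (cnj \<zeta>))" using A0_adj_gam[OF y, of "cnj \<zeta>"] k by simp
    have "((f - f, g - g), (h - 0, h' - y)) \<in> G" by (rule G_diff[OF G1 y])
    hence m: "(h, h' - y) \<in> mulr G" by (simp add: mulr_def zero_prod_def)
    show "q \<in> rsum {(k, (0, k')) | k k'. (k, k') \<in> adj (gam (cnj \<zeta>))} ({0} \<times> mulr G)"
      unfolding rsum_def q
      by (rule CollectI, rule exI[of _ k], rule exI[of _ "(0, y)"], rule exI[of _ 0], rule exI[of _ "(h, h' - y)"])
         (use ky m in auto)
  qed
next
  show "rsum {(k, (0, k')) | k k'. (k, k') \<in> adj (gam (cnj \<zeta>))} ({0} \<times> mulr G) \<subseteq> Hrel A0 \<zeta> O G"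
  proof
    fix q assume "q \<in> rsum {(k, (0, k')) | k k'. (k, k') \<in> adj (gam (cnj \<zeta>))} ({0} \<times> mulr G)"
    then obtain k k' m1 m2 where q: "q = (k, (m1, k' + m2))" and kk: "(k, k') \<in> adj (gam (cnj \<zeta>))"
      and m: "((0, 0), (m1, m2)) \<in> G"
      by (auto simp: rsum_def mulr_def zero_prod_def)
    obtain f g where fg: "(f, g) \<in> A0" "g - cscale \<zeta> f = k" using ran_full[OF z] by blast
    obtain y where y: "((f, g), (0, y)) \<in> G" using fg by (auto simp: A0_iff)
    have "(k, y) \<in> adj (gam (cnj \<zeta>))" using A0_adj_gam[OF y, of "cnj \<zeta>"] fg by simp
    hence yk: "y = k'" using adj_gam_unique[of "cnj \<zeta>", OF _ _ kk] z by simp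
    have "((f + 0, g + 0), (0 + m1, y + m2)) \<in> G" by (rule G_add[OF y m])
    hence "((f, g), (m1, k' + m2)) \<in> G" using yk by simp
    moreover have "(k, (f, g)) \<in> Hrel A0 \<zeta>" using fg by (auto simp: Hrel_iff)
    ultimately show "q \<in> Hrel A0 \<zeta> O G" using q by blast
  qed
qed

lemma Hrel_G1:
  assumes z: "Im \<zeta> \<noteq> 0"
  shows "Hrel A0 \<zeta> O bp1 G = rsum (adj (gam (cnj \<zeta>))) ({0} \<times> mulr (bp1 G))"
proof
  show "Hrel A0 \<zeta> O bp1 G \<subseteq> rsum (adj (gam (cnj \<zeta>))) ({0} \<times> mulr (bp1 G))"
  proof
    fix q assume "q \<in> Hrel A0 \<zeta> O bp1 G"
    then obtain k f g h h' where q: "q = (k, h')" and fg: "(f, g) \<in> A0" and k: "k = g - cscale \<zeta> f"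
      and G1: "((f, g), (h, h')) \<in> G"
      by (auto simp: Hrel_iff bp1_def)
    obtain y where y: "((f, g), (0, y)) \<in> G" using fg by (auto simp: A0_iff)
    have ky: "(k, y) \<in> adj (gam (cnj \<zeta>))" using A0_adj_gam[OF y, of "cnj \<zeta>"] k by simp
    have "((f - f, g - g), (h - 0, h' - y)) \<in> G" by (rule G_diff[OF G1 y])
    hence m: "h' - y \<in> mulr (bp1 G)" by (auto simp: mulr_def zero_prod_def bp1_def)
    show "q \<in> rsum (adj (gam (cnj \<zeta>))) ({0} \<times> mulr (bp1 G))"
      unfolding rsum_def q
      by (rule CollectI, rule exI[of _ k], rule exI[of _ y], rule exI[of _ 0], rule exI[of _ "h' - y"])
         (use ky m in auto)
  qed
next
  show "rsum (adj (gam (cnj \<zeta>))) ({0} \<times> mulr (bp1 G)) \<subseteq> Hrel A0 \<zeta> O bp1 G"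
  proof
    fix q assume "q \<in> rsum (adj (gam (cnj \<zeta>))) ({0} \<times> mulr (bp1 G))"
    then obtain k k' m1 m2 where q: "q = (k, k' + m2)" and kk: "(k, k') \<in> adj (gam (cnj \<zeta>))"
      and m: "((0, 0), (m1, m2)) \<in> G"
      by (auto simp: rsum_def mulr_def zero_prod_def bp1_def)
    obtain f g where fg: "(f, g) \<in> A0" "g - cscale \<zeta> f = k" using ran_full[OF z] by blast
    obtain y where y: "((f, g), (0, y)) \<in> G" using fg by (auto simp: A0_iff)
    have "(k, y) \<in> adj (gam (cnj \<zeta>))" using A0_adj_gam[OF y, of "cnj \<zeta>"] fg by simp
    hence yk: "y = k'" using adj_gam_unique[of "cnj \<zeta>", OF _ _ kk] z by simp
    have "((f + 0, g + 0), (0 + m1, y + m2)) \<in> G" by (rule G_add[OF y m])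
    hence "((f, g), k' + m2) \<in> bp1 G" using yk by (auto simp: bp1_def)
    moreover have "(k, (f, g)) \<in> Hrel A0 \<zeta>" using fg by (auto simp: Hrel_iff)
    ultimately show "q \<in> Hrel A0 \<zeta> O bp1 G" using q by blast
  qed
qed

end

lemma graph_iff: "(x, y) \<in> graph F \<longleftrightarrow> y = F x"
  by (auto simp: graph_def)

lemma bclin_zero: "bounded_clinear_map F \<Longrightarrow> F 0 = 0"
  by (metis add_cancel_right_right bounded_clinear_map_def add_0)

lemma graph_props:
  fixes F :: "'a::chilbert \<Rightarrow> 'b::chilbert"
  assumes "bounded_clinear_map F" "\<And>h. norm (F h) \<le> C * norm h"
  shows "is_operator (graph F)" "bounded_rel (graph F)" "Domain (graph F) = UNIV"
proof -
  show "is_operator (graph F)" using bclin_zero[OF assms(1)]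
    by (auto simp: is_operator_def mulr_def graph_iff)
  show "bounded_rel (graph F)" unfolding bounded_rel_def using assms(2) by (intro exI[of _ C]) (auto simp: graph_def)
  show "Domain (graph F) = UNIV" by (auto simp: graph_def)
qed

context ABP begin

definition Gam :: "complex \<Rightarrow> 'b \<Rightarrow> 'a" where "Gam \<zeta> = clf (gam \<zeta>)"

definition gC :: "complex \<Rightarrow> real" where
  "gC \<zeta> = (SOME C. C \<ge> 0 \<and> (\<forall>h x. (h, x) \<in> gam \<zeta> \<longrightarrow> norm x \<le> C * norm h))"

lemma gC: "Im \<zeta> \<noteq> 0 \<Longrightarrow> gC \<zeta> \<ge> 0 \<and> (\<forall>h x. (h, x) \<in> gam \<zeta> \<longrightarrow> norm x \<le> gC \<zeta> * norm h)"
  unfolding gC_def by (rule someI_ex) (use gam_bounded in blast)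

lemma Gam_props:
  assumes z: "Im \<zeta> \<noteq> 0"
  shows "closure (gam \<zeta>) = graph (Gam \<zeta>)" "bounded_clinear_map (Gam \<zeta>)"
    "\<And>h. norm (Gam \<zeta> h) \<le> gC \<zeta> * norm h"
  using closure_bdd_op[OF gam_cs, of \<zeta> "gC \<zeta>"] gC[OF z] gam_dense[OF z]
  unfolding Gam_def by blast+

lemma Gam_mem: "Im \<zeta> \<noteq> 0 \<Longrightarrow> (h, x) \<in> gam \<zeta> \<Longrightarrow> Gam \<zeta> h = x"
  using Gam_props(1)[of \<zeta>] closure_subset[of "gam \<zeta>"] by (auto simp: graph_iff)

lemma Gam_bl: "Im \<zeta> \<noteq> 0 \<Longrightarrow> bounded_linear (Gam \<zeta>)"
  by (rule bclin_bounded_linear[OF Gam_props(2)])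

lemma Gam_cont: "Im \<zeta> \<noteq> 0 \<Longrightarrow> continuous_on UNIV (Gam \<zeta>)"
  by (rule linear_continuous_on[OF Gam_bl])

lemma clgam_props:
  assumes z: "Im \<zeta> \<noteq> 0"
  shows "is_operator (closure (gam \<zeta>))" "bounded_rel (closure (gam \<zeta>))"
    "Domain (closure (gam \<zeta>)) = UNIV"
  using graph_props[OF Gam_props(2,3)[OF z]] Gam_props(1)[OF z] by simp_all

lemma clgam_ran: "Range (closure (gam \<zeta>)) \<subseteq> Nker \<zeta> (adj A)"
proof -
  have "closure (gam \<zeta>) \<subseteq> (\<lambda>p. (snd p, cscale \<zeta> (snd p))) -` adj A"
  proof (rule closure_minimal)
    show "gam \<zeta> \<subseteq> (\<lambda>p. (snd p, cscale \<zeta> (snd p))) -` adj A"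
      using Dsub by (force simp: gam_iff)
    show "closed ((\<lambda>p. (snd p, cscale \<zeta> (snd p))) -` adj A)"
      by (intro continuous_closed_vimage closed_adj continuous_intros)
  qed
  thus ?thesis by (force simp: Nker_def)
qed

definition Tf :: "complex \<Rightarrow> complex \<Rightarrow> 'a \<Rightarrow> 'a" where
  "Tf \<zeta> \<mu> x = x + cscale (\<zeta> - \<mu>) (res \<zeta> x)"

lemma resolv_iff: "Im \<zeta> \<noteq> 0 \<Longrightarrow> (x, w) \<in> resolv A0 \<zeta> \<longleftrightarrow> w = res \<zeta> x"
proof
  assume z: "Im \<zeta> \<noteq> 0"
  { assume "(x, w) \<in> resolv A0 \<zeta>"
    then obtain g where "(w, g) \<in> A0" "x = g - cscale \<zeta> w" by (auto simp: resolv_def)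
    thus "w = res \<zeta> x" using res_unique[OF z] by blast }
  { assume w: "w = res \<zeta> x"
    have "(res \<zeta> x, x + cscale \<zeta> (res \<zeta> x)) \<in> A0" by (rule res_mem[OF z])
    thus "(x, w) \<in> resolv A0 \<zeta>" unfolding resolv_def w
      by (intro CollectI exI[of _ "res \<zeta> x"] exI[of _ "x + cscale \<zeta> (res \<zeta> x)"]) simp }
qed

lemma T_iff: "Im \<zeta> \<noteq> 0 \<Longrightarrow> (x, z) \<in> opsum Id (smult_rel (\<zeta> - \<mu>) (resolv A0 \<zeta>)) \<longleftrightarrow> z = Tf \<zeta> \<mu> x"
  by (auto simp: opsum_def smult_rel_def resolv_iff Tf_def)

lemma Tf_cont: "Im \<zeta> \<noteq> 0 \<Longrightarrow> continuous_on UNIV (Tf \<zeta> \<mu>)"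
  unfolding Tf_def by (intro continuous_intros linear_continuous_on[OF res_bl])

lemma cscale_calc: "cscale \<mu> x + cscale (\<zeta> - \<mu>) (x + cscale \<zeta> v) = cscale \<zeta> (x + cscale (\<zeta> - \<mu>) (v::'c::chilbert))"
proof -
  have "cscale \<mu> x + cscale (\<zeta> - \<mu>) (x + cscale \<zeta> v) = (cscale \<mu> x + cscale (\<zeta> - \<mu>) x) + cscale ((\<zeta> - \<mu>) * \<zeta>) v"
    by (simp add: cscale_add_right cscale_cscale add.assoc)
  also have "cscale \<mu> x + cscale (\<zeta> - \<mu>) x = cscale \<zeta> x" by (simp add: cscale_add_left[symmetric])
  also have "cscale \<zeta> x + cscale ((\<zeta> - \<mu>) * \<zeta>) v = cscale \<zeta> (x + cscale (\<zeta> - \<mu>) v)"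
    by (simp add: cscale_add_right cscale_cscale mult.commute)
  finally show ?thesis .
qed

lemma gam_T:
  assumes z: "Im \<zeta> \<noteq> 0" and hx: "(h, x) \<in> gam \<mu>"
  shows "(h, Tf \<zeta> \<mu> x) \<in> gam \<zeta>"
proof -
  obtain h' where G1: "((x, cscale \<mu> x), (h, h')) \<in> G" using hx by (auto simp: gam_iff)
  define v where "v = res \<zeta> x"
  have vA: "(v, x + cscale \<zeta> v) \<in> A0" unfolding v_def by (rule res_mem[OF z])
  then obtain y where y: "((v, x + cscale \<zeta> v), (0, y)) \<in> G" by (auto simp: A0_iff)
  from G_add[OF G1 G_scale[OF y, of "\<zeta> - \<mu>"]]
  have "((x + cscale (\<zeta> - \<mu>) v, cscale \<mu> x + cscale (\<zeta> - \<mu>) (x + cscale \<zeta> v)),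
         (h + cscale (\<zeta> - \<mu>) 0, h' + cscale (\<zeta> - \<mu>) y)) \<in> G" .
  hence "((x + cscale (\<zeta> - \<mu>) v, cscale \<zeta> (x + cscale (\<zeta> - \<mu>) v)), (h, h' + cscale (\<zeta> - \<mu>) y)) \<in> G"
    by (simp add: cscale_calc)
  thus ?thesis by (auto simp: gam_iff Tf_def v_def)
qed

lemma clgam_formula:
  assumes z: "Im \<zeta> \<noteq> 0" and m: "Im \<mu> \<noteq> 0"
  shows "closure (gam \<zeta>) = closure (gam \<mu>) O opsum Id (smult_rel (\<zeta> - \<mu>) (resolv A0 \<zeta>))"
proof -
  define Phi where "Phi p = (fst p, Tf \<zeta> \<mu> (snd p))" for p :: "'b \<times> 'a"
  have sub: "Phi ` closure (gam \<mu>) \<subseteq> closure (gam \<zeta>)"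
  proof (rule image_closure_subset)
    show "continuous_on (closure (gam \<mu>)) Phi" unfolding Phi_def
      by (intro continuous_intros continuous_on_compose2[OF Tf_cont[OF z]]) auto
    show "Phi ` gam \<mu> \<subseteq> closure (gam \<zeta>)" using gam_T[OF z] closure_subset by (force simp: Phi_def)
  qed simp
  show ?thesis
  proof
    show "closure (gam \<zeta>) \<subseteq> closure (gam \<mu>) O opsum Id (smult_rel (\<zeta> - \<mu>) (resolv A0 \<zeta>))"
    proof
      fix p assume p: "p \<in> closure (gam \<zeta>)"
      obtain h w where pw: "p = (h, w)" by fastforce
      have hm: "(h, Gam \<mu> h) \<in> closure (gam \<mu>)" using Gam_props(1)[OF m] by (simp add: graph_iff)
      hence "Phi (h, Gam \<mu> h) \<in> closure (gam \<zeta>)" using sub by blast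
      hence "Tf \<zeta> \<mu> (Gam \<mu> h) = Gam \<zeta> h" using Gam_props(1)[OF z] by (simp add: Phi_def graph_iff)
      moreover have "w = Gam \<zeta> h" using p pw Gam_props(1)[OF z] by (simp add: graph_iff)
      ultimately have "(Gam \<mu> h, w) \<in> opsum Id (smult_rel (\<zeta> - \<mu>) (resolv A0 \<zeta>))"
        using T_iff[OF z] by simp
      from relcompI[OF hm this] show "p \<in> closure (gam \<mu>) O opsum Id (smult_rel (\<zeta> - \<mu>) (resolv A0 \<zeta>))"
        using pw by simp
    qed
    show "closure (gam \<mu>) O opsum Id (smult_rel (\<zeta> - \<mu>) (resolv A0 \<zeta>)) \<subseteq> closure (gam \<zeta>)"
    proof
      fix p assume "p \<in> closure (gam \<mu>) O opsum Id (smult_rel (\<zeta> - \<mu>) (resolv A0 \<zeta>))"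
      then obtain h x w where p: "p = (h, w)" and hx: "(h, x) \<in> closure (gam \<mu>)"
        and xw: "(x, w) \<in> opsum Id (smult_rel (\<zeta> - \<mu>) (resolv A0 \<zeta>))"
        by (metis relcompE)
      have w: "w = Tf \<zeta> \<mu> x" using xw T_iff[OF z] by simp
      have "Phi (h, x) \<in> closure (gam \<zeta>)" using sub hx by blast
      thus "p \<in> closure (gam \<zeta>)" using p w by (simp add: Phi_def)
    qed
  qed
qed

end

lemma graph_on_op: "0 \<in> D \<Longrightarrow> F 0 = 0 \<Longrightarrow> is_operator {(h, F h) | h. h \<in> D}"
  by (auto simp: is_operator_def mulr_def)

context ABP begin

abbreviation "wey \<zeta> \<equiv> weyl G \<zeta>"

lemma weyl_iff: "(h, k) \<in> wey \<zeta> \<longleftrightarrow> (\<exists>f. ((f, cscale \<zeta> f), (h, k)) \<in> G)"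
  by (auto simp: weyl_def)

lemma Dr_zero: "0 \<in> Dr" using G_zero by (auto simp: Dr_iff)

lemma weyl_zero: "(0, 0) \<in> wey \<zeta>" using G_zero by (auto simp: weyl_iff intro!: exI[of _ 0])

lemma weyl_unique:
  assumes z: "Im \<zeta> \<noteq> 0" and "(h, k1) \<in> wey \<zeta>" "(h, k2) \<in> wey \<zeta>"
  shows "k1 = k2"
proof -
  obtain f1 f2 where f1: "((f1, cscale \<zeta> f1), (h, k1)) \<in> G" and f2: "((f2, cscale \<zeta> f2), (h, k2)) \<in> G"
    using assms by (auto simp: weyl_iff)
  from G_diff[OF f1 f2] have d: "((f1 - f2, cscale \<zeta> (f1 - f2)), (0, k1 - k2)) \<in> G"
    by (simp add: cscale_diff_right)
  hence "(f1 - f2, cscale \<zeta> (f1 - f2)) \<in> A0" by (auto simp: A0_iff)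
  from A0_lower[OF this, of \<zeta>] z have "f1 - f2 = 0" by (simp add: mult_le_0_iff)
  hence d0: "((0, 0), (0, k1 - k2)) \<in> G" using d by simp
  have "k1 - k2 = 0"
  proof (rule dense_zero[OF rdense])
    fix k assume "k \<in> Dr"
    then obtain g g' k' where gk: "((g, g'), (k, k')) \<in> G" by (auto simp: Dr_iff)
    from green[OF d0 gk] have "cinner (k1 - k2) k = 0" by simp
    thus "cinner k (k1 - k2) = 0" by (metis cinner_commute complex_cnj_zero)
  qed
  thus ?thesis by simp
qed

lemma weyl_op: "Im \<zeta> \<noteq> 0 \<Longrightarrow> is_operator (wey \<zeta>)"
  using weyl_unique[of \<zeta> 0] weyl_zero[of \<zeta>] by (auto simp: is_operator_def mulr_def)

lemma weyl_dom: "Im \<zeta> \<noteq> 0 \<Longrightarrow> Domain (wey \<zeta>) = Dr"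
proof
  assume z: "Im \<zeta> \<noteq> 0"
  show "Domain (wey \<zeta>) \<subseteq> Dr" by (auto simp: weyl_iff Dr_iff) blast
  show "Dr \<subseteq> Domain (wey \<zeta>)"
  proof
    fix h assume "h \<in> Dr"
    then obtain f f' h' where fG: "((f, f'), (h, h')) \<in> G" by (auto simp: Dr_iff)
    obtain u u' y where "((f - u, cscale \<zeta> (f - u)), (h, h' - y)) \<in> G"
      using decomp_G[OF z fG] by blast
    hence "(h, h' - y) \<in> wey \<zeta>" by (auto simp: weyl_iff)
    thus "h \<in> Domain (wey \<zeta>)" by blast
  qed
qed

definition Mf :: "complex \<Rightarrow> 'b \<Rightarrow> 'b" where "Mf \<zeta> h = (THE k. (h, k) \<in> wey \<zeta>)"

lemma Mf_mem: "Im \<zeta> \<noteq> 0 \<Longrightarrow> h \<in> Dr \<Longrightarrow> (h, Mf \<zeta> h) \<in> wey \<zeta>"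
  unfolding Mf_def by (rule theI') (use weyl_dom weyl_unique in blast)

lemma Mf_eq: "Im \<zeta> \<noteq> 0 \<Longrightarrow> (h, k) \<in> wey \<zeta> \<Longrightarrow> Mf \<zeta> h = k"
  using weyl_unique Mf_mem weyl_dom by blast

lemma weyl_graph: "Im \<zeta> \<noteq> 0 \<Longrightarrow> wey \<zeta> = {(h, Mf \<zeta> h) | h. h \<in> Dr}"
proof -
  assume z: "Im \<zeta> \<noteq> 0"
  show ?thesis
  proof
    show "wey \<zeta> \<subseteq> {(h, Mf \<zeta> h) | h. h \<in> Dr}"
    proof
      fix p assume p: "p \<in> wey \<zeta>"
      obtain h k where hk: "p = (h, k)" by fastforce
      have "h \<in> Dr" using p hk weyl_dom[OF z] by blast
      thus "p \<in> {(h, Mf \<zeta> h) | h. h \<in> Dr}" using Mf_eq[OF z] p hk by auto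
    qed
    show "{(h, Mf \<zeta> h) | h. h \<in> Dr} \<subseteq> wey \<zeta>" using Mf_mem[OF z] by auto
  qed
qed

lemma gM: "Im \<zeta> \<noteq> 0 \<Longrightarrow> h \<in> Dr \<Longrightarrow> ((Gam \<zeta> h, cscale \<zeta> (Gam \<zeta> h)), (h, Mf \<zeta> h)) \<in> G"
proof -
  assume z: "Im \<zeta> \<noteq> 0" and h: "h \<in> Dr"
  obtain f where f: "((f, cscale \<zeta> f), (h, Mf \<zeta> h)) \<in> G" using Mf_mem[OF z h] by (auto simp: weyl_iff)
  hence "(h, f) \<in> gam \<zeta>" by (auto simp: gam_iff)
  hence "Gam \<zeta> h = f" by (rule Gam_mem[OF z])
  thus ?thesis using f by simp
qed

lemma GW:
  assumes z: "Im \<zeta> \<noteq> 0" and n: "Im \<nu> \<noteq> 0" and h: "h \<in> Dr" and k: "k \<in> Dr"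
  shows "cinner (Mf \<zeta> h) k - cinner h (Mf \<nu> k) = (\<zeta> - cnj \<nu>) * cinner (Gam \<zeta> h) (Gam \<nu> k)"
  using green[OF gM[OF z h] gM[OF n k]]
  by (simp add: cinner_cscale_left cinner_cscale_right algebra_simps)

lemma MM:
  assumes z: "Im \<zeta> \<noteq> 0" and h: "h \<in> Dr" and k: "k \<in> Dr"
  shows "cinner (Mf \<zeta> h) k = cinner h (Mf (cnj \<zeta>) k)"
  using GW[OF z _ h k, of "cnj \<zeta>"] z by simp

lemma weyl_adj: "Im \<zeta> \<noteq> 0 \<Longrightarrow> wey \<zeta> \<subseteq> adj (wey (cnj \<zeta>))"
proof
  fix p assume z: "Im \<zeta> \<noteq> 0" and p: "p \<in> wey \<zeta>"
  then obtain h where h: "h \<in> Dr" and ph: "p = (h, Mf \<zeta> h)" using weyl_graph[OF z] by auto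
  have zc: "Im (cnj \<zeta>) \<noteq> 0" using z by simp
  show "p \<in> adj (wey (cnj \<zeta>))" unfolding ph
  proof (rule adjI)
    fix k k1 assume "(k, k1) \<in> wey (cnj \<zeta>)"
    then obtain kD: "k \<in> Dr" and k1: "k1 = Mf (cnj \<zeta>) k" using weyl_graph[OF zc] by auto
    show "cinner k1 h = cinner k (Mf \<zeta> h)" using MM[OF zc kD h] k1 by simp
  qed
qed

lemma weyl_dense: "Im \<zeta> \<noteq> 0 \<Longrightarrow> closure (Domain (wey \<zeta>)) = UNIV"
  using weyl_dom rdense by simp

lemma adjM: assumes z: "Im \<zeta> \<noteq> 0" and h: "h \<in> Dr" and hk: "(h, k') \<in> adj (wey \<zeta>)"
  shows "k' = Mf (cnj \<zeta>) h"
proof -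
  have zc: "Im (cnj \<zeta>) \<noteq> 0" using z by simp
  have "(h, Mf (cnj \<zeta>) h) \<in> adj (wey \<zeta>)" using weyl_adj[OF zc] Mf_mem[OF zc h] by auto
  thus ?thesis using adj_unique[OF weyl_dense[OF z] hk] by simp
qed

definition ImF :: "complex \<Rightarrow> 'b \<Rightarrow> 'b" where
  "ImF \<zeta> h = cscale (1 / (2 * \<i>)) (Mf \<zeta> h - Mf (cnj \<zeta>) h)"

lemma ImM_eq: "Im \<zeta> \<noteq> 0 \<Longrightarrow> ImM Dr (wey \<zeta>) = {(h, ImF \<zeta> h) | h. h \<in> Dr}"
proof -
  assume z: "Im \<zeta> \<noteq> 0"
  have zc: "Im (cnj \<zeta>) \<noteq> 0" using z by simp
  show ?thesis
  proof
    show "ImM Dr (wey \<zeta>) \<subseteq> {(h, ImF \<zeta> h) | h. h \<in> Dr}"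
    proof
      fix p assume "p \<in> ImM Dr (wey \<zeta>)"
      then obtain h k k' where p: "p = (h, cscale (1 / (2 * \<i>)) (k - k'))" and h: "h \<in> Dr"
        and hk: "(h, k) \<in> wey \<zeta>" and hk': "(h, k') \<in> adj (wey \<zeta>)"
        unfolding ImM_def by blast
      have "k = Mf \<zeta> h" using Mf_eq[OF z hk] by simp
      moreover have "k' = Mf (cnj \<zeta>) h" by (rule adjM[OF z h hk'])
      ultimately show "p \<in> {(h, ImF \<zeta> h) | h. h \<in> Dr}" using p h by (auto simp: ImF_def)
    qed
    show "{(h, ImF \<zeta> h) | h. h \<in> Dr} \<subseteq> ImM Dr (wey \<zeta>)"
    proof
      fix p assume "p \<in> {(h, ImF \<zeta> h) | h. h \<in> Dr}"
      then obtain h where h: "h \<in> Dr" and p: "p = (h, ImF \<zeta> h)" by auto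
      have "(h, Mf (cnj \<zeta>) h) \<in> adj (wey \<zeta>)" using weyl_adj[OF zc] Mf_mem[OF zc h] by auto
      thus "p \<in> ImM Dr (wey \<zeta>)" unfolding ImM_def p ImF_def using h Mf_mem[OF z h] by blast
    qed
  qed
qed

lemma ImF_inner:
  assumes z: "Im \<zeta> \<noteq> 0" and h: "h \<in> Dr" and k: "k \<in> Dr"
  shows "cinner (ImF \<zeta> h) k = of_real (Im \<zeta>) * cinner (Gam \<zeta> h) (Gam \<zeta> k)"
proof -
  have zc: "Im (cnj \<zeta>) \<noteq> 0" using z by simp
  have a: "cinner (Mf \<zeta> h) k - cinner h (Mf \<zeta> k) = (\<zeta> - cnj \<zeta>) * cinner (Gam \<zeta> h) (Gam \<zeta> k)"
    by (rule GW[OF z z h k])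
  have b: "cinner (Mf (cnj \<zeta>) h) k = cinner h (Mf \<zeta> k)" using MM[OF zc h k] by simp
  have "cinner (ImF \<zeta> h) k = (1 / (2 * \<i>)) * ((\<zeta> - cnj \<zeta>) * cinner (Gam \<zeta> h) (Gam \<zeta> k))"
    unfolding ImF_def cinner_cscale_left cinner_diff_left using a b by simp
  also have "\<zeta> - cnj \<zeta> = 2 * \<i> * of_real (Im \<zeta>)" by (simp add: complex_diff_cnj)
  finally show ?thesis by simp
qed

lemma ImF_bound:
  assumes z: "Im \<zeta> \<noteq> 0" and h: "h \<in> Dr"
  shows "norm (ImF \<zeta> h) \<le> \<bar>Im \<zeta>\<bar> * (gC \<zeta>)^2 * norm h"
proof (rule norm_le_from_cinner_dense[OF rdense])
  have C0: "gC \<zeta> \<ge> 0" using gC[OF z] by blast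
  fix k assume k: "k \<in> Dr"
  have "cmod (cinner (ImF \<zeta> h) k) = \<bar>Im \<zeta>\<bar> * cmod (cinner (Gam \<zeta> h) (Gam \<zeta> k))"
    by (simp add: ImF_inner[OF z h k] norm_mult)
  also have "\<dots> \<le> \<bar>Im \<zeta>\<bar> * (norm (Gam \<zeta> h) * norm (Gam \<zeta> k))"
    by (intro mult_left_mono cauchy_schwarz) auto
  also have "\<dots> \<le> \<bar>Im \<zeta>\<bar> * ((gC \<zeta> * norm h) * (gC \<zeta> * norm k))"
    by (intro mult_left_mono mult_mono Gam_props(3)[OF z]) (auto simp: C0)
  finally show "cmod (cinner (ImF \<zeta> h) k) \<le> \<bar>Im \<zeta>\<bar> * (gC \<zeta>)^2 * norm h * norm k"
    by (simp add: power2_eq_square algebra_simps)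
next
  show "0 \<le> \<bar>Im \<zeta>\<bar> * (gC \<zeta>)\<^sup>2 * norm h" by simp
qed

lemma Mf_zero: "Im \<zeta> \<noteq> 0 \<Longrightarrow> Mf \<zeta> 0 = 0"
  using Mf_eq weyl_zero by blast

lemma ImM_props:
  assumes z: "Im \<zeta> \<noteq> 0"
  shows "is_operator (ImM Dr (wey \<zeta>))" "bounded_rel (ImM Dr (wey \<zeta>))"
    "kerr (ImM Dr (wey \<zeta>)) = mulr (bp0 G)"
proof -
  have zc: "Im (cnj \<zeta>) \<noteq> 0" using z by simp
  show "is_operator (ImM Dr (wey \<zeta>))" unfolding ImM_eq[OF z]
    by (rule graph_on_op[OF Dr_zero]) (simp add: ImF_def Mf_zero[OF z] Mf_zero[OF zc])
  show "bounded_rel (ImM Dr (wey \<zeta>))" unfolding ImM_eq[OF z] bounded_rel_def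
    using ImF_bound[OF z] by (intro exI[of _ "\<bar>Im \<zeta>\<bar> * (gC \<zeta>)^2"]) auto
  show "kerr (ImM Dr (wey \<zeta>)) = mulr (bp0 G)"
  proof
    show "kerr (ImM Dr (wey \<zeta>)) \<subseteq> mulr (bp0 G)"
    proof
      fix h assume "h \<in> kerr (ImM Dr (wey \<zeta>))"
      hence h: "h \<in> Dr" and i0: "ImF \<zeta> h = 0" by (auto simp: kerr_def ImM_eq[OF z])
      have "of_real (Im \<zeta>) * cinner (Gam \<zeta> h) (Gam \<zeta> h) = 0" using ImF_inner[OF z h h] i0 by simp
      hence "Gam \<zeta> h = 0" using z by (simp add: cinner_self_eq_0)
      hence "((0, 0), (h, Mf \<zeta> h)) \<in> G" using gM[OF z h] by simp
      thus "h \<in> mulr (bp0 G)" by (auto simp: mulr_def bp0_def zero_prod_def)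
    qed
    show "mulr (bp0 G) \<subseteq> kerr (ImM Dr (wey \<zeta>))"
    proof
      fix h assume "h \<in> mulr (bp0 G)"
      then obtain h1 where h1: "((0, 0), (h, h1)) \<in> G" by (auto simp: mulr_def bp0_def zero_prod_def)
      hence h: "h \<in> Dr" by (auto simp: Dr_iff)
      have "(h, 0) \<in> gam \<zeta>" using h1 by (auto simp: gam_iff)
      hence g0: "Gam \<zeta> h = 0" by (rule Gam_mem[OF z])
      have "ImF \<zeta> h = 0"
      proof (rule dense_zero[OF rdense])
        fix k assume k: "k \<in> Dr"
        have "cinner (ImF \<zeta> h) k = 0" using ImF_inner[OF z h k] g0 by simp
        thus "cinner k (ImF \<zeta> h) = 0" by (metis cinner_commute complex_cnj_zero)
      qed
      thus "h \<in> kerr (ImM Dr (wey \<zeta>))" using h by (auto simp: kerr_def ImM_eq[OF z])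
    qed
  qed
qed

end

context ABP begin

lemma weyl_add: "(h, a) \<in> wey \<zeta> \<Longrightarrow> (k, b) \<in> wey \<zeta> \<Longrightarrow> (h + k, a + b) \<in> wey \<zeta>"
proof -
  assume "(h, a) \<in> wey \<zeta>" "(k, b) \<in> wey \<zeta>"
  then obtain f g where f: "((f, cscale \<zeta> f), (h, a)) \<in> G" and g: "((g, cscale \<zeta> g), (k, b)) \<in> G"
    by (auto simp: weyl_iff)
  from G_add[OF f g] show ?thesis by (auto simp: weyl_iff cscale_add_right intro!: exI[of _ "f + g"])
qed

lemma weyl_scale: "(h, a) \<in> wey \<zeta> \<Longrightarrow> (cscale c h, cscale c a) \<in> wey \<zeta>"
proof -
  assume "(h, a) \<in> wey \<zeta>"
  then obtain f where f: "((f, cscale \<zeta> f), (h, a)) \<in> G" by (auto simp: weyl_iff)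
  from G_scale[OF f, of c] show ?thesis
    by (auto simp: weyl_iff cscale_cscale mult.commute intro!: exI[of _ "cscale c f"])
qed

lemma Dr_add: "h \<in> Dr \<Longrightarrow> k \<in> Dr \<Longrightarrow> h + k \<in> Dr"
  by (auto simp: Dr_iff dest: G_add)

lemma Dr_scale: "h \<in> Dr \<Longrightarrow> cscale c h \<in> Dr"
  by (auto simp: Dr_iff dest: G_scale[of _ _ _ _ c])

lemma Mf_add: "Im \<zeta> \<noteq> 0 \<Longrightarrow> h \<in> Dr \<Longrightarrow> k \<in> Dr \<Longrightarrow> Mf \<zeta> (h + k) = Mf \<zeta> h + Mf \<zeta> k"
  by (rule Mf_eq) (auto intro: weyl_add Mf_mem)

lemma Mf_scale: "Im \<zeta> \<noteq> 0 \<Longrightarrow> h \<in> Dr \<Longrightarrow> Mf \<zeta> (cscale c h) = cscale c (Mf \<zeta> h)"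
  by (rule Mf_eq) (auto intro: weyl_scale Mf_mem)

definition Ef :: "complex \<Rightarrow> 'b \<Rightarrow> 'b" where
  "Ef \<mu> h = cscale (1 / 2) (Mf \<mu> h + Mf (cnj \<mu>) h)"

lemma ReM_eq: "Im \<mu> \<noteq> 0 \<Longrightarrow> ReM Dr (wey \<mu>) = {(h, Ef \<mu> h) | h. h \<in> Dr}"
proof -
  assume z: "Im \<mu> \<noteq> 0"
  have zc: "Im (cnj \<mu>) \<noteq> 0" using z by simp
  show ?thesis
  proof
    show "ReM Dr (wey \<mu>) \<subseteq> {(h, Ef \<mu> h) | h. h \<in> Dr}"
    proof
      fix p assume "p \<in> ReM Dr (wey \<mu>)"
      then obtain h k k' where p: "p = (h, cscale (1 / 2) (k + k'))" and h: "h \<in> Dr"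
        and hk: "(h, k) \<in> wey \<mu>" and hk': "(h, k') \<in> adj (wey \<mu>)"
        unfolding ReM_def by blast
      have "k = Mf \<mu> h" using Mf_eq[OF z hk] by simp
      moreover have "k' = Mf (cnj \<mu>) h" by (rule adjM[OF z h hk'])
      ultimately show "p \<in> {(h, Ef \<mu> h) | h. h \<in> Dr}" using p h by (auto simp: Ef_def)
    qed
    show "{(h, Ef \<mu> h) | h. h \<in> Dr} \<subseteq> ReM Dr (wey \<mu>)"
    proof
      fix p assume "p \<in> {(h, Ef \<mu> h) | h. h \<in> Dr}"
      then obtain h where h: "h \<in> Dr" and p: "p = (h, Ef \<mu> h)" by auto
      have "(h, Mf (cnj \<mu>) h) \<in> adj (wey \<mu>)" using weyl_adj[OF zc] Mf_mem[OF zc h] by auto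
      thus "p \<in> ReM Dr (wey \<mu>)" unfolding ReM_def p Ef_def using h Mf_mem[OF z h] by blast
    qed
  qed
qed

lemma E_sym:
  assumes z: "Im \<mu> \<noteq> 0" and h: "h \<in> Dr" and k: "k \<in> Dr"
  shows "cinner (Ef \<mu> k) h = cinner k (Ef \<mu> h)"
proof -
  have zc: "Im (cnj \<mu>) \<noteq> 0" using z by simp
  have a: "cinner (Mf \<mu> k) h = cinner k (Mf (cnj \<mu>) h)" by (rule MM[OF z k h])
  have b: "cinner (Mf (cnj \<mu>) k) h = cinner k (Mf \<mu> h)" using MM[OF zc k h] by simp
  show ?thesis unfolding Ef_def
    by (simp add: cinner_cscale_left cinner_cscale_right cinner_add_left cinner_add_right a b algebra_simps)
qed

lemma E_props:
  assumes z: "Im \<mu> \<noteq> 0"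
  shows "is_operator (ReM Dr (wey \<mu>))" "closure (Domain (ReM Dr (wey \<mu>))) = UNIV"
    "ReM Dr (wey \<mu>) \<subseteq> adj (ReM Dr (wey \<mu>))"
proof -
  have zc: "Im (cnj \<mu>) \<noteq> 0" using z by simp
  show "is_operator (ReM Dr (wey \<mu>))" unfolding ReM_eq[OF z]
    by (rule graph_on_op[OF Dr_zero]) (simp add: Ef_def Mf_zero[OF z] Mf_zero[OF zc])
  have "Domain (ReM Dr (wey \<mu>)) = Dr" unfolding ReM_eq[OF z] by auto
  thus "closure (Domain (ReM Dr (wey \<mu>))) = UNIV" using rdense by simp
  show "ReM Dr (wey \<mu>) \<subseteq> adj (ReM Dr (wey \<mu>))" unfolding ReM_eq[OF z]
  proof
    fix p assume "p \<in> {(h, Ef \<mu> h) | h. h \<in> Dr}"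
    then obtain h where h: "h \<in> Dr" and p: "p = (h, Ef \<mu> h)" by auto
    show "p \<in> adj {(h, Ef \<mu> h) | h. h \<in> Dr}" unfolding p
      by (rule adjI) (auto simp: E_sym[OF z h])
  qed
qed

definition M0f :: "complex \<Rightarrow> complex \<Rightarrow> 'b \<Rightarrow> 'b" where
  "M0f \<mu> z h = Mf z h - Ef \<mu> h"

definition M0 :: "complex \<Rightarrow> complex \<Rightarrow> ('b \<times> 'b) set" where
  "M0 \<mu> z = {(h, M0f \<mu> z h) | h. h \<in> Dr}"

lemma weyl_opsum: "Im \<mu> \<noteq> 0 \<Longrightarrow> Im z \<noteq> 0 \<Longrightarrow> wey z = opsum (ReM Dr (wey \<mu>)) (M0 \<mu> z)"
proof -
  assume m: "Im \<mu> \<noteq> 0" and z: "Im z \<noteq> 0"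
  have "opsum (ReM Dr (wey \<mu>)) (M0 \<mu> z) = {(h, Mf z h) | h. h \<in> Dr}"
    unfolding ReM_eq[OF m] M0_def opsum_def M0f_def by auto
  thus ?thesis using weyl_graph[OF z] by simp
qed

lemma M0_dom: "Domain (M0 \<mu> z) = Dr" by (auto simp: M0_def)

lemma M0_cs:
  assumes m: "Im \<mu> \<noteq> 0" and z: "Im z \<noteq> 0"
  shows "csubspace (M0 \<mu> z)"
proof -
  have mc: "Im (cnj \<mu>) \<noteq> 0" using m by simp
  have add: "M0f \<mu> z (h + k) = M0f \<mu> z h + M0f \<mu> z k" if "h \<in> Dr" "k \<in> Dr" for h k
    using that by (simp add: M0f_def Ef_def Mf_add[OF z] Mf_add[OF m] Mf_add[OF mc] cscale_add_right algebra_simps)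
  have sc: "M0f \<mu> z (cscale c h) = cscale c (M0f \<mu> z h)" if "h \<in> Dr" for h c
    using that by (simp add: M0f_def Ef_def Mf_scale[OF z] Mf_scale[OF m] Mf_scale[OF mc]
        cscale_add_right cscale_diff_right cscale_cscale mult.commute)
  show ?thesis unfolding csubspace_def M0_def
  proof (intro conjI ballI allI)
    show "0 \<in> {(h, M0f \<mu> z h) |h. h \<in> Dr}" using Dr_zero
      by (auto simp: zero_prod_def M0f_def Ef_def Mf_zero[OF z] Mf_zero[OF m] Mf_zero[OF mc] intro!: exI[of _ 0])
  next
    fix p q assume "p \<in> {(h, M0f \<mu> z h) |h. h \<in> Dr}" "q \<in> {(h, M0f \<mu> z h) |h. h \<in> Dr}"
    then obtain h k where "p = (h, M0f \<mu> z h)" "q = (k, M0f \<mu> z k)" "h \<in> Dr" "k \<in> Dr" by auto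
    thus "p + q \<in> {(h, M0f \<mu> z h) |h. h \<in> Dr}" using add Dr_add by auto
  next
    fix c p assume "p \<in> {(h, M0f \<mu> z h) |h. h \<in> Dr}"
    then obtain h where "p = (h, M0f \<mu> z h)" "h \<in> Dr" by auto
    thus "cscale c p \<in> {(h, M0f \<mu> z h) |h. h \<in> Dr}" using sc Dr_scale by (auto simp: cscale_prod_def)
  qed
qed

lemma M0_inner:
  assumes m: "Im \<mu> \<noteq> 0" and z: "Im z \<noteq> 0" and h: "h \<in> Dr" and k: "k \<in> Dr"
  shows "cinner (M0f \<mu> z h) k = (z - \<mu>) * cinner (Gam z h) (Gam (cnj \<mu>) k)
     - (1 / 2) * ((cnj \<mu> - \<mu>) * cinner (Gam (cnj \<mu>) h) (Gam (cnj \<mu>) k))"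
proof -
  have mc: "Im (cnj \<mu>) \<noteq> 0" using m by simp
  have a: "cinner (Mf z h) k - cinner h (Mf (cnj \<mu>) k) = (z - \<mu>) * cinner (Gam z h) (Gam (cnj \<mu>) k)"
    using GW[OF z mc h k] by simp
  have b: "cinner (Mf \<mu> h) k = cinner h (Mf (cnj \<mu>) k)" by (rule MM[OF m h k])
  have c: "cinner (Mf (cnj \<mu>) h) k - cinner h (Mf (cnj \<mu>) k) = (cnj \<mu> - \<mu>) * cinner (Gam (cnj \<mu>) h) (Gam (cnj \<mu>) k)"
    using GW[OF mc mc h k] by simp
  have "cinner (M0f \<mu> z h) k = cinner (Mf z h) k - (1/2) * cinner (Mf \<mu> h) k - (1/2) * cinner (Mf (cnj \<mu>) h) k"
    by (simp add: M0f_def Ef_def cinner_diff_left cinner_cscale_left cinner_add_left algebra_simps)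
  thus ?thesis using a b c by (simp add: field_simps) algebra
qed

definition BM :: "complex \<Rightarrow> complex \<Rightarrow> real" where
  "BM \<mu> z = cmod (z - \<mu>) * gC z * gC (cnj \<mu>) + cmod (cnj \<mu> - \<mu>) * (gC (cnj \<mu>))^2"

lemma M0_bound:
  assumes m: "Im \<mu> \<noteq> 0" and z: "Im z \<noteq> 0" and h: "h \<in> Dr"
  shows "norm (M0f \<mu> z h) \<le> BM \<mu> z * norm h"
proof (rule norm_le_from_cinner_dense[OF rdense])
  have mc: "Im (cnj \<mu>) \<noteq> 0" using m by simp
  have C1: "gC z \<ge> 0" using gC[OF z] by blast
  have C2: "gC (cnj \<mu>) \<ge> 0" using gC[OF mc] by blast
  fix k assume k: "k \<in> Dr"
  have g1: "cmod (cinner (Gam z h) (Gam (cnj \<mu>) k)) \<le> gC z * norm h * (gC (cnj \<mu>) * norm k)"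
    by (rule order_trans[OF cauchy_schwarz mult_mono[OF Gam_props(3)[OF z] Gam_props(3)[OF mc]]])
       (auto simp: C1 C2)
  have g2: "cmod (cinner (Gam (cnj \<mu>) h) (Gam (cnj \<mu>) k)) \<le> gC (cnj \<mu>) * norm h * (gC (cnj \<mu>) * norm k)"
    by (rule order_trans[OF cauchy_schwarz mult_mono[OF Gam_props(3)[OF mc] Gam_props(3)[OF mc]]])
       (auto simp: C2)
  have "cmod (cinner (M0f \<mu> z h) k) \<le> cmod ((z - \<mu>) * cinner (Gam z h) (Gam (cnj \<mu>) k))
     + cmod ((1 / 2) * ((cnj \<mu> - \<mu>) * cinner (Gam (cnj \<mu>) h) (Gam (cnj \<mu>) k)))"
    unfolding M0_inner[OF m z h k] by (rule norm_triangle_ineq4)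
  also have "\<dots> \<le> cmod (z - \<mu>) * (gC z * norm h * (gC (cnj \<mu>) * norm k))
     + cmod (cnj \<mu> - \<mu>) * (gC (cnj \<mu>) * norm h * (gC (cnj \<mu>) * norm k))"
  proof (rule add_mono)
    show "cmod ((z - \<mu>) * cinner (Gam z h) (Gam (cnj \<mu>) k)) \<le> cmod (z - \<mu>) * (gC z * norm h * (gC (cnj \<mu>) * norm k))"
      unfolding norm_mult by (rule mult_left_mono[OF g1]) simp
    have "cmod ((1 / 2) * ((cnj \<mu> - \<mu>) * cinner (Gam (cnj \<mu>) h) (Gam (cnj \<mu>) k)))
        \<le> cmod ((cnj \<mu> - \<mu>) * cinner (Gam (cnj \<mu>) h) (Gam (cnj \<mu>) k))"
      unfolding norm_mult by simp
    also have "\<dots> \<le> cmod (cnj \<mu> - \<mu>) * (gC (cnj \<mu>) * norm h * (gC (cnj \<mu>) * norm k))"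
      unfolding norm_mult by (rule mult_left_mono[OF g2]) simp
    finally show "cmod ((1 / 2) * ((cnj \<mu> - \<mu>) * cinner (Gam (cnj \<mu>) h) (Gam (cnj \<mu>) k)))
        \<le> cmod (cnj \<mu> - \<mu>) * (gC (cnj \<mu>) * norm h * (gC (cnj \<mu>) * norm k))" .
  qed
  also have "\<dots> = BM \<mu> z * norm h * norm k" by (simp add: BM_def power2_eq_square algebra_simps)
  finally show "cmod (cinner (M0f \<mu> z h) k) \<le> BM \<mu> z * norm h * norm k" .
next
  have mc: "Im (cnj \<mu>) \<noteq> 0" using m by simp
  have "BM \<mu> z \<ge> 0" unfolding BM_def using gC[OF z] gC[OF mc] by simp
  thus "0 \<le> BM \<mu> z * norm h" by simp
qed

definition Gz :: "complex \<Rightarrow> complex \<Rightarrow> 'b \<Rightarrow> 'b" where "Gz \<mu> z = clf (M0 \<mu> z)"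

lemma Gz_props:
  assumes m: "Im \<mu> \<noteq> 0" and z: "Im z \<noteq> 0"
  shows "closure (M0 \<mu> z) = graph (Gz \<mu> z)" "bounded_clinear_map (Gz \<mu> z)"
    "\<And>h. norm (Gz \<mu> z h) \<le> BM \<mu> z * norm h"
proof -
  have bd: "\<And>h x. (h, x) \<in> M0 \<mu> z \<Longrightarrow> norm x \<le> BM \<mu> z * norm h"
    using M0_bound[OF m z] by (auto simp: M0_def)
  have dn: "closure (Domain (M0 \<mu> z)) = UNIV" using rdense by (simp add: M0_dom)
  show "closure (M0 \<mu> z) = graph (Gz \<mu> z)" "bounded_clinear_map (Gz \<mu> z)"
    "\<And>h. norm (Gz \<mu> z h) \<le> BM \<mu> z * norm h"
    using closure_bdd_op[OF M0_cs[OF m z] bd dn] unfolding Gz_def by blast+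
qed

lemma Gz_eq: "Im \<mu> \<noteq> 0 \<Longrightarrow> Im z \<noteq> 0 \<Longrightarrow> h \<in> Dr \<Longrightarrow> Gz \<mu> z h = M0f \<mu> z h"
proof -
  assume m: "Im \<mu> \<noteq> 0" and z: "Im z \<noteq> 0" and h: "h \<in> Dr"
  have "(h, M0f \<mu> z h) \<in> closure (M0 \<mu> z)" using h closure_subset by (force simp: M0_def)
  thus ?thesis using Gz_props(1)[OF m z] by (simp add: graph_iff)
qed

lemma M0_props:
  assumes m: "Im \<mu> \<noteq> 0" and z: "Im z \<noteq> 0"
  shows "is_operator (M0 \<mu> z)" "bounded_rel (M0 \<mu> z)" "Domain (M0 \<mu> z) = Domain (ReM Dr (wey \<mu>))"
proof -
  have mc: "Im (cnj \<mu>) \<noteq> 0" using m by simp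
  show "is_operator (M0 \<mu> z)" unfolding M0_def
    by (rule graph_on_op[OF Dr_zero]) (simp add: M0f_def Ef_def Mf_zero[OF z] Mf_zero[OF m] Mf_zero[OF mc])
  show "bounded_rel (M0 \<mu> z)" unfolding bounded_rel_def M0_def
    using M0_bound[OF m z] by (intro exI[of _ "BM \<mu> z"]) auto
  show "Domain (M0 \<mu> z) = Domain (ReM Dr (wey \<mu>))" unfolding M0_dom ReM_eq[OF m] by auto
qed

end

lemma bcl_cont: "bounded_clinear_map F \<Longrightarrow> continuous_on S f \<Longrightarrow> continuous_on S (\<lambda>x. F (f x))"
  by (rule continuous_on_compose2[OF linear_continuous_on[OF bclin_bounded_linear]]) auto

lemma bcl_comp:
  assumes "bounded_clinear_map F" "bounded_clinear_map H"
  shows "bounded_clinear_map (\<lambda>x. F (H x))"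
proof -
  obtain K1 where K1: "\<forall>x. norm (F x) \<le> norm x * K1" using assms(1) by (auto simp: bounded_clinear_map_def)
  obtain K2 where K2: "\<forall>x. norm (H x) \<le> norm x * K2" using assms(2) by (auto simp: bounded_clinear_map_def)
  have K2': "\<forall>x. norm (H x) \<le> norm x * max K2 0"
    using K2 by (metis max.cobounded1 mult_left_mono norm_ge_zero order_trans)
  have K1': "\<forall>x. norm (F x) \<le> norm x * max K1 0"
    using K1 by (metis max.cobounded1 mult_left_mono norm_ge_zero order_trans)
  show ?thesis unfolding bounded_clinear_map_def
  proof (intro conjI allI)
    fix x y show "F (H (x + y)) = F (H x) + F (H y)" using assms by (simp add: bounded_clinear_map_def)
  next
    fix c x show "F (H (cscale c x)) = cscale c (F (H x))" using assms by (simp add: bounded_clinear_map_def)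
  next
    show "\<exists>K. \<forall>x. norm (F (H x)) \<le> norm x * K"
    proof (intro exI allI)
      fix x
      have "norm (F (H x)) \<le> norm (H x) * max K1 0" using K1' by blast
      also have "\<dots> \<le> (norm x * max K2 0) * max K1 0" using K2' by (intro mult_right_mono) auto
      finally show "norm (F (H x)) \<le> norm x * (max K2 0 * max K1 0)" by (simp add: mult.assoc)
    qed
  qed
qed

context ABP begin

definition Adjf :: "complex \<Rightarrow> 'a \<Rightarrow> 'b" where "Adjf \<nu> = clf (adj (gam \<nu>))"

lemma Adjf_props:
  assumes n: "Im \<nu> \<noteq> 0"
  shows "adj (gam \<nu>) = graph (Adjf \<nu>)" "bounded_clinear_map (Adjf \<nu>)"
proof -
  obtain C where C: "\<forall>(f, g) \<in> adj (gam \<nu>). norm g \<le> C * norm f"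
    using adj_gam_bounded[OF n] by (auto simp: bounded_rel_def)
  have bd: "\<And>h x. (h, x) \<in> adj (gam \<nu>) \<Longrightarrow> norm x \<le> C * norm h" using C by blast
  have dn: "closure (Domain (adj (gam \<nu>))) = UNIV" using adj_gam_dom[OF n] by simp
  have cl: "closure (adj (gam \<nu>)) = adj (gam \<nu>)" by (rule closure_closed[OF closed_adj])
  show "adj (gam \<nu>) = graph (Adjf \<nu>)" "bounded_clinear_map (Adjf \<nu>)"
    using closure_bdd_op[OF csubspace_adj bd dn] cl unfolding Adjf_def by simp_all
qed

lemma Gam_on_Dr: "Im \<nu> \<noteq> 0 \<Longrightarrow> k \<in> Dr \<Longrightarrow> (k, Gam \<nu> k) \<in> gam \<nu>"
proof -
  assume n: "Im \<nu> \<noteq> 0" and k: "k \<in> Dr"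
  then obtain x where "(k, x) \<in> gam \<nu>" using gam_dom[OF n] by blast
  thus ?thesis using Gam_mem[OF n] by simp
qed

lemma Adjf_inner:
  assumes n: "Im \<nu> \<noteq> 0"
  shows "cinner (Adjf \<nu> y) k = cinner y (Gam \<nu> k)"
proof (rule dense_eq[OF rdense, where f="\<lambda>k. cinner (Adjf \<nu> y) k" and g="\<lambda>k. cinner y (Gam \<nu> k)"])
  show "continuous_on UNIV (\<lambda>k. cinner (Adjf \<nu> y) k)" by (intro continuous_intros)
  show "continuous_on UNIV (\<lambda>k. cinner y (Gam \<nu> k))"
    by (intro continuous_intros bcl_cont[OF Gam_props(2)[OF n]])
  fix k assume k: "k \<in> Dr"
  have "(y, Adjf \<nu> y) \<in> adj (gam \<nu>)" using Adjf_props(1)[OF n] by (simp add: graph_iff)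
  from adjD[OF this Gam_on_Dr[OF n k]] have "cinner (Gam \<nu> k) y = cinner k (Adjf \<nu> y)" .
  thus "cinner (Adjf \<nu> y) k = cinner y (Gam \<nu> k)" by (metis cinner_commute)
qed

lemma Gz_diff_inner:
  assumes m: "Im \<mu> \<noteq> 0" and w: "Im w \<noteq> 0" and z: "Im z \<noteq> 0"
  shows "cinner (Gz \<mu> w h - Gz \<mu> z h) k = (w - z) * cinner (Gam w h) (Gam (cnj z) k)"
proof -
  have zc: "Im (cnj z) \<noteq> 0" using z by simp
  have onDr: "cinner (Gz \<mu> w h - Gz \<mu> z h) k = (w - z) * cinner (Gam w h) (Gam (cnj z) k)"
    if h: "h \<in> Dr" and k: "k \<in> Dr" for h k
  proof -
    have a: "cinner (Mf w h) k - cinner h (Mf (cnj z) k) = (w - z) * cinner (Gam w h) (Gam (cnj z) k)"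
      using GW[OF w zc h k] by simp
    have b: "cinner (Mf z h) k = cinner h (Mf (cnj z) k)" by (rule MM[OF z h k])
    show ?thesis using a b h
      by (simp add: Gz_eq[OF m w] Gz_eq[OF m z] M0f_def cinner_diff_left)
  qed
  have step1: "cinner (Gz \<mu> w h - Gz \<mu> z h) k = (w - z) * cinner (Gam w h) (Gam (cnj z) k)"
    if k: "k \<in> Dr" for h k
    by (rule dense_eq[OF rdense, where f="\<lambda>h. cinner (Gz \<mu> w h - Gz \<mu> z h) k"
          and g="\<lambda>h. (w - z) * cinner (Gam w h) (Gam (cnj z) k)"])
       (auto intro!: continuous_intros bcl_cont[OF Gz_props(2)[OF m w]] bcl_cont[OF Gz_props(2)[OF m z]]
          bcl_cont[OF Gam_props(2)[OF w]] onDr k)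
  show ?thesis
    by (rule dense_eq[OF rdense, where f="\<lambda>k. cinner (Gz \<mu> w h - Gz \<mu> z h) k"
          and g="\<lambda>k. (w - z) * cinner (Gam w h) (Gam (cnj z) k)"])
       (auto intro!: continuous_intros bcl_cont[OF Gam_props(2)[OF zc]] step1)
qed

lemma Gam_T':
  assumes w: "Im w \<noteq> 0" and z: "Im z \<noteq> 0"
  shows "Gam w x = Gam z x + cscale (w - z) (res w (Gam z x))"
proof -
  have "(x, Gam w x) \<in> closure (gam w)" using Gam_props(1)[OF w] by (simp add: graph_iff)
  hence "(x, Gam w x) \<in> closure (gam z) O opsum Id (smult_rel (w - z) (resolv A0 w))"
    using clgam_formula[OF w z] by simp
  then obtain y where xy: "(x, y) \<in> closure (gam z)" and yw: "(y, Gam w x) \<in> opsum Id (smult_rel (w - z) (resolv A0 w))"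
    by blast
  have "y = Gam z x" using xy Gam_props(1)[OF z] by (simp add: graph_iff)
  moreover have "Gam w x = Tf w z y" using yw T_iff[OF w] by simp
  ultimately show ?thesis by (simp add: Tf_def)
qed

definition Dz :: "complex \<Rightarrow> 'b \<Rightarrow> 'b" where "Dz z h = Adjf (cnj z) (Gam z h)"

lemma Dz_bcl: "Im z \<noteq> 0 \<Longrightarrow> bounded_clinear_map (Dz z)"
  unfolding Dz_def by (rule bcl_comp[OF Adjf_props(2) Gam_props(2)]) simp_all

definition Lf :: "complex \<Rightarrow> complex \<Rightarrow> complex \<Rightarrow> 'b \<Rightarrow> 'b" where
  "Lf \<mu> z w x = cscale (inverse (w - z)) (Gz \<mu> w x - Gz \<mu> z x) - Dz z x"

lemma Lf_inner:
  assumes m: "Im \<mu> \<noteq> 0" and w: "Im w \<noteq> 0" and z: "Im z \<noteq> 0" and wz: "w \<noteq> z"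
  shows "cinner (Lf \<mu> z w x) k = cinner (cscale (w - z) (res w (Gam z x))) (Gam (cnj z) k)"
proof -
  have zc: "Im (cnj z) \<noteq> 0" using z by simp
  have "cinner (Lf \<mu> z w x) k = inverse (w - z) * ((w - z) * cinner (Gam w x) (Gam (cnj z) k))
      - cinner (Gam z x) (Gam (cnj z) k)"
    using Gz_diff_inner[OF m w z, of x k]
    unfolding Lf_def Dz_def cinner_diff_left[of "cscale _ _"] cinner_cscale_left Adjf_inner[OF zc]
    by simp
  also have "\<dots> = cinner (Gam w x - Gam z x) (Gam (cnj z) k)"
    using wz by (simp add: cinner_diff_left)
  also have "Gam w x - Gam z x = cscale (w - z) (res w (Gam z x))" using Gam_T'[OF w z] by simp
  finally show ?thesis .
qed

lemma Lf_bl: "Im \<mu> \<noteq> 0 \<Longrightarrow> Im w \<noteq> 0 \<Longrightarrow> Im z \<noteq> 0 \<Longrightarrow> bounded_linear (Lf \<mu> z w)"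
  unfolding Lf_def
  by (intro bounded_linear_sub bounded_linear_compose[OF bounded_bilinear.bounded_linear_right[OF bounded_bilinear_cscale]]
      bclin_bounded_linear Gz_props(2) Dz_bcl) simp_all

lemma Lf_onorm:
  assumes m: "Im \<mu> \<noteq> 0" and w: "Im w \<noteq> 0" and z: "Im z \<noteq> 0" and wz: "w \<noteq> z"
  shows "onorm (Lf \<mu> z w) \<le> cmod (w - z) * gC z * gC (cnj z) / \<bar>Im w\<bar>"
proof (rule onorm_bound)
  have zc: "Im (cnj z) \<noteq> 0" using z by simp
  have C1: "gC z \<ge> 0" using gC[OF z] by blast
  have C2: "gC (cnj z) \<ge> 0" using gC[OF zc] by blast
  show "0 \<le> cmod (w - z) * gC z * gC (cnj z) / \<bar>Im w\<bar>" using C1 C2 by simp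
  fix x
  show "norm (Lf \<mu> z w x) \<le> cmod (w - z) * gC z * gC (cnj z) / \<bar>Im w\<bar> * norm x"
  proof (rule norm_le_from_cinner)
    fix k
    have r: "norm (res w (Gam z x)) \<le> gC z * norm x / \<bar>Im w\<bar>"
    proof -
      have "\<bar>Im w\<bar> * norm (res w (Gam z x)) \<le> norm (Gam z x)" by (rule res_bound[OF w])
      also have "\<dots> \<le> gC z * norm x" by (rule Gam_props(3)[OF z])
      finally show ?thesis using w by (simp add: field_simps mult.commute)
    qed
    have "cmod (cinner (Lf \<mu> z w x) k) \<le> norm (cscale (w - z) (res w (Gam z x))) * norm (Gam (cnj z) k)"
      unfolding Lf_inner[OF m w z wz] by (rule cauchy_schwarz)
    also have "\<dots> \<le> (cmod (w - z) * (gC z * norm x / \<bar>Im w\<bar>)) * (gC (cnj z) * norm k)"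
      unfolding norm_cscale
      by (intro mult_mono mult_left_mono r Gam_props(3)[OF zc]) (auto simp: C1 C2)
    also have "\<dots> = cmod (w - z) * gC z * gC (cnj z) / \<bar>Im w\<bar> * norm x * norm k" by simp
    finally show "cmod (cinner (Lf \<mu> z w x) k) \<le> cmod (w - z) * gC z * gC (cnj z) / \<bar>Im w\<bar> * norm x * norm k" .
  next
    show "0 \<le> cmod (w - z) * gC z * gC (cnj z) / \<bar>Im w\<bar> * norm x" using C1 C2 by simp
  qed
qed

lemma Gz_deriv:
  assumes m: "Im \<mu> \<noteq> 0" and z: "Im z \<noteq> 0"
  shows "((\<lambda>w. onorm (\<lambda>x. cscale (inverse (w - z)) (Gz \<mu> w x - Gz \<mu> z x) - Dz z x)) \<longlongrightarrow> 0) (at z)"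
proof -
  define K where "K = gC z * gC (cnj z)"
  have K0: "0 \<le> K" unfolding K_def using gC[OF z] gC[of "cnj z"] z by simp
  have ev: "eventually (\<lambda>w. Im w \<noteq> 0 \<and> w \<noteq> z) (at z)"
    unfolding eventually_at
  proof (rule exI[of _ "\<bar>Im z\<bar>"], rule conjI)
    show "0 < \<bar>Im z\<bar>" using z by simp
    show "\<forall>w\<in>UNIV. w \<noteq> z \<and> dist w z < \<bar>Im z\<bar> \<longrightarrow> Im w \<noteq> 0 \<and> w \<noteq> z"
    proof (intro ballI impI)
      fix w assume "w \<noteq> z \<and> dist w z < \<bar>Im z\<bar>"
      hence wz: "w \<noteq> z" and d: "cmod (w - z) < \<bar>Im z\<bar>" by (auto simp: dist_norm)
      have "\<bar>Im w - Im z\<bar> \<le> cmod (w - z)" using abs_Im_le_cmod[of "w - z"] by simp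
      thus "Im w \<noteq> 0 \<and> w \<noteq> z" using d wz by auto
    qed
  qed
  have lim: "((\<lambda>w. cmod (w - z) * K / \<bar>Im w\<bar>) \<longlongrightarrow> cmod (z - z) * K / \<bar>Im z\<bar>) (at z)"
    using z by (intro tendsto_intros) auto
  hence lim0: "((\<lambda>w. cmod (w - z) * K / \<bar>Im w\<bar>) \<longlongrightarrow> 0) (at z)" by simp
  show ?thesis
  proof (rule tendsto_0_le[OF lim0, where K=1])
    show "eventually (\<lambda>w. norm (onorm (\<lambda>x. cscale (inverse (w - z)) (Gz \<mu> w x - Gz \<mu> z x) - Dz z x))
        \<le> norm (cmod (w - z) * K / \<bar>Im w\<bar>) * 1) (at z)"
      using ev
    proof (rule eventually_mono)
      fix w assume "Im w \<noteq> 0 \<and> w \<noteq> z"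
      hence w: "Im w \<noteq> 0" and wz: "w \<noteq> z" by auto
      have eq: "(\<lambda>x. cscale (inverse (w - z)) (Gz \<mu> w x - Gz \<mu> z x) - Dz z x) = Lf \<mu> z w"
        by (simp add: Lf_def fun_eq_iff)
      have o0: "0 \<le> onorm (Lf \<mu> z w)" by (rule onorm_pos_le[OF Lf_bl[OF m w z]])
      have o1: "onorm (Lf \<mu> z w) \<le> cmod (w - z) * K / \<bar>Im w\<bar>"
        using Lf_onorm[OF m w z wz] by (simp add: K_def mult.assoc)
      show "norm (onorm (\<lambda>x. cscale (inverse (w - z)) (Gz \<mu> w x - Gz \<mu> z x) - Dz z x))
        \<le> norm (cmod (w - z) * K / \<bar>Im w\<bar>) * 1"
        unfolding eq using o0 o1 K0 by (simp add: abs_mult)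
    qed
  qed
qed

end

context ABP begin

lemma M0_adj:
  assumes m: "Im \<mu> \<noteq> 0" and z: "Im z \<noteq> 0"
  shows "closure (M0 \<mu> (cnj z)) = adj (closure (M0 \<mu> z))"
proof -
  have zc: "Im (cnj z) \<noteq> 0" using z by simp
  have inr: "(h, Gz \<mu> (cnj z) h) \<in> adj (M0 \<mu> z)" for h
  proof (rule adjI)
    fix k v assume "(k, v) \<in> M0 \<mu> z"
    then obtain k: "k \<in> Dr" and v: "v = M0f \<mu> z k" by (auto simp: M0_def)
    show "cinner v h = cinner k (Gz \<mu> (cnj z) h)" unfolding v
    proof (rule dense_eq[OF rdense, where f="\<lambda>h. cinner (M0f \<mu> z k) h" and g="\<lambda>h. cinner k (Gz \<mu> (cnj z) h)"])
      show "continuous_on UNIV (\<lambda>h. cinner (M0f \<mu> z k) h)" by (intro continuous_intros)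
      show "continuous_on UNIV (\<lambda>h. cinner k (Gz \<mu> (cnj z) h))"
        by (intro continuous_intros bcl_cont[OF Gz_props(2)[OF m zc]])
      fix h assume h: "h \<in> Dr"
      have a: "cinner (Mf z k) h = cinner k (Mf (cnj z) h)" by (rule MM[OF z k h])
      have b: "cinner (Ef \<mu> k) h = cinner k (Ef \<mu> h)" by (rule E_sym[OF m h k])
      show "cinner (M0f \<mu> z k) h = cinner k (Gz \<mu> (cnj z) h)"
        unfolding Gz_eq[OF m zc h] M0f_def cinner_diff_left cinner_diff_right a b ..
    qed
  qed
  have "adj (M0 \<mu> z) = graph (Gz \<mu> (cnj z))"
  proof
    show "graph (Gz \<mu> (cnj z)) \<subseteq> adj (M0 \<mu> z)" using inr by (auto simp: graph_def)
    show "adj (M0 \<mu> z) \<subseteq> graph (Gz \<mu> (cnj z))"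
    proof
      fix p assume p: "p \<in> adj (M0 \<mu> z)"
      obtain h y where hy: "p = (h, y)" by fastforce
      have dn: "closure (Domain (M0 \<mu> z)) = UNIV" using rdense by (simp add: M0_dom)
      have "y = Gz \<mu> (cnj z) h" using adj_unique[OF dn _ inr[of h]] p hy by simp
      thus "p \<in> graph (Gz \<mu> (cnj z))" using hy by (simp add: graph_iff)
    qed
  qed
  thus ?thesis using Gz_props(1)[OF m zc] by (simp add: adj_closure)
qed

lemma M0_pos:
  assumes m: "Im \<mu> \<noteq> 0" and z: "Im z > 0"
  shows "0 \<le> Im (cinner (Gz \<mu> z h) h)"
proof -
  have z0: "Im z \<noteq> 0" using z by simp
  show ?thesis
  proof (rule dense_le[OF rdense, where f="\<lambda>h. 0" and g="\<lambda>h. Im (cinner (Gz \<mu> z h) h)"])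
    show "continuous_on UNIV (\<lambda>h. 0::real)" by simp
    show "continuous_on UNIV (\<lambda>h. Im (cinner (Gz \<mu> z h) h))"
      by (intro continuous_intros bcl_cont[OF Gz_props(2)[OF m z0]])
    fix h assume h: "h \<in> Dr"
    define a where "a = cinner (Mf z h) h"
    have "a - cnj a = (z - cnj z) * cinner (Gam z h) (Gam z h)"
      using GW[OF z0 z0 h h] by (simp add: a_def cinner_commute[of h "Mf z h"])
    hence "complex_of_real (2 * Im a) * \<i> = complex_of_real (2 * Im z) * \<i> * of_real ((norm (Gam z h))^2)"
      by (simp add: complex_diff_cnj cinner_norm)
    hence "complex_of_real (Im a) = complex_of_real (Im z * (norm (Gam z h))^2)" by simp
    hence ia: "Im a = Im z * (norm (Gam z h))^2" using of_real_eq_iff by blast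
    have "cinner (Ef \<mu> h) h = cinner h (Ef \<mu> h)" by (rule E_sym[OF m h h])
    hence "cinner (Ef \<mu> h) h = cnj (cinner (Ef \<mu> h) h)" by (metis cinner_commute)
    hence ie: "Im (cinner (Ef \<mu> h) h) = 0" by (metis cnj.simps(2) equal_neg_zero)
    have "Im (cinner (Gz \<mu> z h) h) = Im a - Im (cinner (Ef \<mu> h) h)"
      by (simp add: Gz_eq[OF m z0 h] M0f_def cinner_diff_left a_def)
    also have "\<dots> = Im z * (norm (Gam z h))^2" using ia ie by simp
    finally show "0 \<le> Im (cinner (Gz \<mu> z h) h)" using z by simp
  qed
qed

lemma nev: "Im \<mu> \<noteq> 0 \<Longrightarrow> nevanlinna (\<lambda>z. closure (M0 \<mu> z))"
  unfolding nevanlinna_def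
proof (intro exI[of _ "Gz \<mu>"] conjI)
  assume m: "Im \<mu> \<noteq> 0"
  show "\<forall>z. Im z \<noteq> 0 \<longrightarrow> closure (M0 \<mu> z) = graph (Gz \<mu> z) \<and> bounded_clinear_map (Gz \<mu> z)"
    using Gz_props(1,2)[OF m] by blast
  show "\<forall>z. Im z \<noteq> 0 \<longrightarrow> (\<exists>D. bounded_clinear_map D \<and>
         ((\<lambda>w. onorm (\<lambda>x. cscale (inverse (w - z)) (Gz \<mu> w x - Gz \<mu> z x) - D x)) \<longlongrightarrow> 0) (at z))"
    using Dz_bcl Gz_deriv[OF m] by blast
  show "\<forall>z. Im z \<noteq> 0 \<longrightarrow> closure (M0 \<mu> (cnj z)) = adj (closure (M0 \<mu> z))"
    using M0_adj[OF m] by blast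
  show "\<forall>z. 0 < Im z \<longrightarrow> (\<forall>h. 0 \<le> Im (cinner (Gz \<mu> z h) h))"
    using M0_pos[OF m] by blast
qed

end

theorem mainTheorem3:
  fixes A :: "('a::chilbert \<times> 'a) set"
    and \<Gamma> :: "(('a \<times> 'a) \<times> ('b::chilbert \<times> 'b)) set"
  assumes "closed_symmetric A"
    and "AB_boundary_pair A \<Gamma>"
  shows
    \<comment> \<open>(i)\<close>
    "kerr \<Gamma> = A \<and>
    \<comment> \<open>(ii)\<close>
     (\<forall>\<zeta>. Im \<zeta> \<noteq> 0 \<longrightarrow>
        Domain \<Gamma> = rsum (bpA0 \<Gamma>) (Nhat \<zeta> (Domain \<Gamma>)) \<and>
        Nhat \<zeta> (adj A) \<subseteq> closure (Nhat \<zeta> (Domain \<Gamma>))) \<and>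
    \<comment> \<open>(iii)\<close>
     (\<forall>\<zeta>. Im \<zeta> \<noteq> 0 \<longrightarrow>
        is_operator (gammaf \<Gamma> \<zeta>) \<and> bounded_rel (gammaf \<Gamma> \<zeta>) \<and>
        closure (Domain (gammaf \<Gamma> \<zeta>)) = UNIV \<and>
        Domain (gammaf \<Gamma> \<zeta>) = Range (bp0 \<Gamma>) \<and>
        Range (gammaf \<Gamma> \<zeta>) = Nker \<zeta> (Domain \<Gamma>) \<and>
        kerr (gammaf \<Gamma> \<zeta>) = mulr (bp0 \<Gamma>)) \<and>
    \<comment> \<open>(iv)\<close>
     (\<forall>\<zeta>. Im \<zeta> \<noteq> 0 \<longrightarrow>
        is_operator (adj (gammaf \<Gamma> \<zeta>)) \<and> bounded_rel (adj (gammaf \<Gamma> \<zeta>)) \<and>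
        Domain (adj (gammaf \<Gamma> \<zeta>)) = UNIV \<and>
        Hrel (bpA0 \<Gamma>) \<zeta> O \<Gamma> =
          rsum {(k, (0, k')) | k k'. (k, k') \<in> adj (gammaf \<Gamma> (cnj \<zeta>))} ({0} \<times> mulr \<Gamma>) \<and>
        Hrel (bpA0 \<Gamma>) \<zeta> O bp1 \<Gamma> =
          rsum (adj (gammaf \<Gamma> (cnj \<zeta>))) ({0} \<times> mulr (bp1 \<Gamma>))) \<and>
    \<comment> \<open>(v)\<close>
     (\<forall>\<zeta>. Im \<zeta> \<noteq> 0 \<longrightarrow>
        is_operator (closure (gammaf \<Gamma> \<zeta>)) \<and> bounded_rel (closure (gammaf \<Gamma> \<zeta>)) \<and>
        Domain (closure (gammaf \<Gamma> \<zeta>)) = UNIV \<and>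
        Range (closure (gammaf \<Gamma> \<zeta>)) \<subseteq> Nker \<zeta> (adj A)) \<and>
     (\<forall>\<zeta> \<mu>. Im \<zeta> \<noteq> 0 \<longrightarrow> Im \<mu> \<noteq> 0 \<longrightarrow>
        closure (gammaf \<Gamma> \<zeta>) =
          closure (gammaf \<Gamma> \<mu>) O opsum Id (smult_rel (\<zeta> - \<mu>) (resolv (bpA0 \<Gamma>) \<zeta>))) \<and>
    \<comment> \<open>(vi)\<close>
     (\<forall>\<zeta>. Im \<zeta> \<noteq> 0 \<longrightarrow>
        is_operator (weyl \<Gamma> \<zeta>) \<and> closure (Domain (weyl \<Gamma> \<zeta>)) = UNIV \<and>
        Domain (weyl \<Gamma> \<zeta>) = Range (bp0 \<Gamma>) \<and>
        weyl \<Gamma> \<zeta> \<subseteq> adj (weyl \<Gamma> (cnj \<zeta>)) \<and>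
        is_operator (ImM (Range (bp0 \<Gamma>)) (weyl \<Gamma> \<zeta>)) \<and>
        bounded_rel (ImM (Range (bp0 \<Gamma>)) (weyl \<Gamma> \<zeta>)) \<and>
        kerr (ImM (Range (bp0 \<Gamma>)) (weyl \<Gamma> \<zeta>)) = mulr (bp0 \<Gamma>)) \<and>
     (\<forall>\<mu>. Im \<mu> \<noteq> 0 \<longrightarrow>
        (let E = ReM (Range (bp0 \<Gamma>)) (weyl \<Gamma> \<mu>) in
          is_operator E \<and> closure (Domain E) = UNIV \<and> E \<subseteq> adj E \<and>
          (\<exists>M0. (\<forall>\<zeta>. Im \<zeta> \<noteq> 0 \<longrightarrow>
                    weyl \<Gamma> \<zeta> = opsum E (M0 \<zeta>) \<and> is_operator (M0 \<zeta>) \<and>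
                    bounded_rel (M0 \<zeta>) \<and> Domain (M0 \<zeta>) = Domain E) \<and>
                 nevanlinna (\<lambda>z. closure (M0 z)))))"
proof -
  interpret ABP A \<Gamma> by (unfold_locales; fact assms)
  have gb: "bounded_rel (gammaf \<Gamma> \<zeta>)" if "Im \<zeta> \<noteq> 0" for \<zeta>
    using gam_bounded[OF that] unfolding bounded_rel_def by blast
  show ?thesis
  proof (intro conjI allI impI)
    show "kerr \<Gamma> = A" by (rule kerG)
  next
    fix \<zeta> :: complex assume z: "Im \<zeta> \<noteq> 0"
    show "Domain \<Gamma> = rsum (bpA0 \<Gamma>) (Nhat \<zeta> (Domain \<Gamma>))" by (rule decomp_D[OF z])
    show "Nhat \<zeta> (adj A) \<subseteq> closure (Nhat \<zeta> (Domain \<Gamma>))" by (rule Nhat_dense[OF z])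
    show "is_operator (gammaf \<Gamma> \<zeta>)" by (rule gam_op[OF z])
    show "bounded_rel (gammaf \<Gamma> \<zeta>)" by (rule gb[OF z])
    show "closure (Domain (gammaf \<Gamma> \<zeta>)) = UNIV" by (rule gam_dense[OF z])
    show "Domain (gammaf \<Gamma> \<zeta>) = Range (bp0 \<Gamma>)" by (rule gam_dom[OF z])
    show "Range (gammaf \<Gamma> \<zeta>) = Nker \<zeta> (Domain \<Gamma>)" by (rule gam_ran)
    show "kerr (gammaf \<Gamma> \<zeta>) = mulr (bp0 \<Gamma>)" by (rule gam_ker)
    show "is_operator (adj (gammaf \<Gamma> \<zeta>))" by (rule adj_gam_op[OF z])
    show "bounded_rel (adj (gammaf \<Gamma> \<zeta>))" by (rule adj_gam_bounded[OF z])
    show "Domain (adj (gammaf \<Gamma> \<zeta>)) = UNIV" by (rule adj_gam_dom[OF z])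
    show "Hrel (bpA0 \<Gamma>) \<zeta> O \<Gamma> =
          rsum {(k, (0, k')) | k k'. (k, k') \<in> adj (gammaf \<Gamma> (cnj \<zeta>))} ({0} \<times> mulr \<Gamma>)"
      by (rule Hrel_G[OF z])
    show "Hrel (bpA0 \<Gamma>) \<zeta> O bp1 \<Gamma> = rsum (adj (gammaf \<Gamma> (cnj \<zeta>))) ({0} \<times> mulr (bp1 \<Gamma>))"
      by (rule Hrel_G1[OF z])
    show "is_operator (closure (gammaf \<Gamma> \<zeta>))" by (rule clgam_props(1)[OF z])
    show "bounded_rel (closure (gammaf \<Gamma> \<zeta>))" by (rule clgam_props(2)[OF z])
    show "Domain (closure (gammaf \<Gamma> \<zeta>)) = UNIV" by (rule clgam_props(3)[OF z])
    show "Range (closure (gammaf \<Gamma> \<zeta>)) \<subseteq> Nker \<zeta> (adj A)" by (rule clgam_ran)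
    show "is_operator (weyl \<Gamma> \<zeta>)" by (rule weyl_op[OF z])
    show "closure (Domain (weyl \<Gamma> \<zeta>)) = UNIV" by (rule weyl_dense[OF z])
    show "Domain (weyl \<Gamma> \<zeta>) = Range (bp0 \<Gamma>)" by (rule weyl_dom[OF z])
    show "weyl \<Gamma> \<zeta> \<subseteq> adj (weyl \<Gamma> (cnj \<zeta>))" by (rule weyl_adj[OF z])
    show "is_operator (ImM (Range (bp0 \<Gamma>)) (weyl \<Gamma> \<zeta>))" by (rule ImM_props(1)[OF z])
    show "bounded_rel (ImM (Range (bp0 \<Gamma>)) (weyl \<Gamma> \<zeta>))" by (rule ImM_props(2)[OF z])
    show "kerr (ImM (Range (bp0 \<Gamma>)) (weyl \<Gamma> \<zeta>)) = mulr (bp0 \<Gamma>)" by (rule ImM_props(3)[OF z])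
  next
    fix \<zeta> \<mu> :: complex assume z: "Im \<zeta> \<noteq> 0" and m: "Im \<mu> \<noteq> 0"
    show "closure (gammaf \<Gamma> \<zeta>) =
          closure (gammaf \<Gamma> \<mu>) O opsum Id (smult_rel (\<zeta> - \<mu>) (resolv (bpA0 \<Gamma>) \<zeta>))"
      by (rule clgam_formula[OF z m])
  next
    fix \<mu> :: complex assume m: "Im \<mu> \<noteq> 0"
    show "let E = ReM (Range (bp0 \<Gamma>)) (weyl \<Gamma> \<mu>) in
          is_operator E \<and> closure (Domain E) = UNIV \<and> E \<subseteq> adj E \<and>
          (\<exists>M0. (\<forall>\<zeta>. Im \<zeta> \<noteq> 0 \<longrightarrow>
                    weyl \<Gamma> \<zeta> = opsum E (M0 \<zeta>) \<and> is_operator (M0 \<zeta>) \<and>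
                    bounded_rel (M0 \<zeta>) \<and> Domain (M0 \<zeta>) = Domain E) \<and>
                 nevanlinna (\<lambda>z. closure (M0 z)))"
      unfolding Let_def
    proof (intro conjI E_props[OF m] exI[of _ "M0 \<mu>"] allI impI nev[OF m])
      fix \<zeta> :: complex assume z: "Im \<zeta> \<noteq> 0"
      show "weyl \<Gamma> \<zeta> = opsum (ReM (Range (bp0 \<Gamma>)) (weyl \<Gamma> \<mu>)) (M0 \<mu> \<zeta>)" by (rule weyl_opsum[OF m z])
      show "is_operator (M0 \<mu> \<zeta>)" by (rule M0_props(1)[OF m z])
      show "bounded_rel (M0 \<mu> \<zeta>)" by (rule M0_props(2)[OF m z])
      show "Domain (M0 \<mu> \<zeta>) = Domain (ReM (Range (bp0 \<Gamma>)) (weyl \<Gamma> \<mu>))" by (rule M0_props(3)[OF m z])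
    qed
  qed
qed


end
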